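(* Let $a<b$, $n\in\mathbb N$, $\alpha=(\alpha_1,\ldots,\alpha_n)$ with $\alpha_j\in(0,1)$, and fix $z_a\in\mathbb R$, $x_a,x_b\in\mathbb R^n$. Call $x=(x_1,\ldots,x_n)$ admissible if $x\in C^1([a,b],\mathbb R^n)$, ${^C_aD^\alpha_t}x:=({^C_aD^{\alpha_1}_t}x_1,\ldots,{^C_aD^{\alpha_n}_t}x_n)\in C^1([a,b],\mathbb R^n)$, $x(a)=x_a$ and $x(b)=x_b$. Let $L:[a,b]\times\mathbb R^{2n+1}\to\mathbb R$, $L=L(t,x,v,z)$, be of class $C^1$. For admissible $x$, let $z[x;\cdot]$ denote the solution of $$\frac{dz}{dt}=L(t,x(t),{^C_aD^\alpha_t}x(t),z(t)),\quad t\in[a,b],\qquad z(a)=z_a,$$ and consider the functional $x\mapsto z[x;b]$. Write $[x,z](t):=(t,x(t),{^C_aD^\alpha_t}x(t),z(t))$ and $\lambda(t):=\exp\left(-\int_a^t\frac{\partial L}{\partial z}[x,z](\tau)\,d\tau\right)$, and assume that for each $j$ the right Riemann–Liouville derivative ${_tD^{\alpha_j}_b}\left(\lambda(t)\frac{\partial L}{\partial {^C_aD^{\alpha_j}_t}x_j}[x,z](t)\right)$ exists and is continuous on $[a,b]$. If $x$ is an admissible function at which $z[x;b]$ attains an extremum (i.e. $\frac{d}{d\epsilon}z[x+\epsilon\eta;b]\big|_{\epsilon=0}=0$ for every $\eta\in C^1([a,b],\mathbb R^n)$ with ${^C_aD^\alpha_t}\eta\in C^1([a,b],\mathbb R^n)$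 and $\eta(a)=\eta(b)=0$), then for all $t\in[a,b]$ and $j=1,\ldots,n$, $$\lambda(t)\frac{\partial L}{\partial x_j}[x,z](t)+{_tD^{\alpha_j}_b}\left(\lambda(t)\frac{\partial L}{\partial {^C_aD^{\alpha_j}_t}x_j}[x,z](t)\right)=0,$$ where $\frac{\partial L}{\partial x_j}$, $\frac{\partial L}{\partial {^C_aD^{\alpha_j}_t}x_j}$, $\frac{\partial L}{\partial z}$ denote the partial derivatives of $L$ with respect to the $j$-th component of its second argument, the $j$-th component of its third argument, and its last argument, respectively.
   Context: For $\alpha\in(0,1)$ and $f:[a,b]\to\mathbb R$: the left Caputo derivative is ${^C_aD^\alpha_t}f(t)=\frac{1}{\Gamma(1-\alpha)}\int_a^t(t-\tau)^{-\alpha}f'(\tau)\,d\tau$; the right Riemann–Liouville integral is ${_tI^{\alpha}_b}f(t)=\frac{1}{\Gamma(\alpha)}\int_t^b(\tau-t)^{\alpha-1}f(\tau)\,d\tau$; the right Riemann–Liouville derivative is ${_tD^\alpha_b}f(t)=\frac{-1}{\Gamma(1-\alpha)}\frac{d}{dt}\int_t^b(\tau-t)^{-\alpha}f(\tau)\,d\tau$. The solution $z[x;t]$ is assumed to exist on $[a,b]$ and to depend differentiably on a parameter $\epsilon$ when $x$ is replaced by $x+\epsilon\eta$; the initial value $z(a)=z_a$ is the same for all argument functions. *)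

theory Defs
  imports "HOL-Analysis.Analysis"
begin

definition C1_on :: "real \<Rightarrow> real \<Rightarrow> (real \<Rightarrow> 'a::real_normed_vector) \<Rightarrow> bool" where
  "C1_on a b f \<longleftrightarrow> (\<exists>f'. continuous_on {a..b} f' \<and>
      (\<forall>t\<in>{a..b}. (f has_vector_derivative f' t) (at t within {a..b})))"

definition caputo :: "real \<Rightarrow> real \<Rightarrow> (real \<Rightarrow> real) \<Rightarrow> real \<Rightarrow> real" where
  "caputo \<alpha> a f t = (1 / Gamma (1 - \<alpha>)) *
      integral {a..t} (\<lambda>\<tau>. (t - \<tau>) powr (- \<alpha>) * vector_derivative f (at \<tau> within {a..t}))"

definition caputo_vec :: "real^'n \<Rightarrow> real \<Rightarrow> (real \<Rightarrow> real^'n) \<Rightarrow> real \<Rightarrow> real^'n" where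
  "caputo_vec \<alpha> a x t = (\<chi> j. caputo (\<alpha> $ j) a (\<lambda>s. x s $ j) t)"

definition rl_right_int :: "real \<Rightarrow> real \<Rightarrow> (real \<Rightarrow> real) \<Rightarrow> real \<Rightarrow> real" where
  "rl_right_int \<alpha> b f t = (1 / Gamma \<alpha>) * integral {t..b} (\<lambda>\<tau>. (\<tau> - t) powr (\<alpha> - 1) * f \<tau>)"

definition rl_right_deriv :: "real \<Rightarrow> real \<Rightarrow> real \<Rightarrow> (real \<Rightarrow> real) \<Rightarrow> real \<Rightarrow> real" where
  "rl_right_deriv \<alpha> a b f t = - vector_derivative (rl_right_int (1 - \<alpha>) b f) (at t within {a..b})"

definition admissible :: "real^'n \<Rightarrow> real \<Rightarrow> real \<Rightarrow> real^'n \<Rightarrow> real^'n \<Rightarrow> (real \<Rightarrow> real^'n) \<Rightarrow> bool" where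
  "admissible \<alpha> a b xa xb x \<longleftrightarrow>
     C1_on a b x \<and> C1_on a b (caputo_vec \<alpha> a x) \<and> x a = xa \<and> x b = xb"

definition variation :: "real^'n \<Rightarrow> real \<Rightarrow> real \<Rightarrow> (real \<Rightarrow> real^'n) \<Rightarrow> bool" where
  "variation \<alpha> a b \<eta> \<longleftrightarrow>
     C1_on a b \<eta> \<and> C1_on a b (caputo_vec \<alpha> a \<eta>) \<and> \<eta> a = 0 \<and> \<eta> b = 0"

definition xz :: "real^'n \<Rightarrow> real \<Rightarrow> (real \<Rightarrow> real^'n) \<Rightarrow> (real \<Rightarrow> real) \<Rightarrow> real
                  \<Rightarrow> real \<times> (real^'n) \<times> (real^'n) \<times> real" where
  "xz \<alpha> a x z t = (t, x t, caputo_vec \<alpha> a x t, z t)"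

definition solves_ivp :: "real \<Rightarrow> real \<Rightarrow> (real \<times> (real^'n) \<times> (real^'n) \<times> real \<Rightarrow> real) \<Rightarrow> real^'n
                          \<Rightarrow> real \<Rightarrow> (real \<Rightarrow> real^'n) \<Rightarrow> (real \<Rightarrow> real) \<Rightarrow> bool" where
  "solves_ivp a b L \<alpha> za x z \<longleftrightarrow> z a = za \<and>
     (\<forall>t\<in>{a..b}. (z has_real_derivative L (xz \<alpha> a x z t)) (at t within {a..b}))"

end

theory Submission
  imports Defs
begin

lemma d1: assumes "\<tau> - t > 0" shows "((\<lambda>\<tau>. (\<tau> - t) powr r) has_real_derivative r * (\<tau>-t) powr (r-1)) (at \<tau> within S)"
proof -
  have "((\<lambda>\<tau>. \<tau> - t) has_real_derivative 1) (at \<tau> within S)" by (auto intro!: derivative_eq_intros)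
  from DERIV_chain2[OF has_real_derivative_powr[OF assms, of r] this] show ?thesis by simp
qed
lemma d2: assumes "t - \<tau> > 0" shows "((\<lambda>\<tau>. (t - \<tau>) powr r) has_real_derivative - r * (t - \<tau>) powr (r-1)) (at \<tau> within S)"
proof -
  have "((\<lambda>\<tau>. t - \<tau>) has_real_derivative -1) (at \<tau> within S)" by (auto intro!: derivative_eq_intros)
  from DERIV_chain2[OF has_real_derivative_powr[OF assms, of r] this] show ?thesis by simp
qed

lemma powr_kernel_has_integral:
  fixes c t \<alpha> :: real
  assumes "c \<le> t" "\<alpha> < 1"
  shows "((\<lambda>\<tau>. (t - \<tau>) powr (-\<alpha>)) has_integral (t - c) powr (1 - \<alpha>) / (1 - \<alpha>)) {c..t}"
proof -
  have "((\<lambda>\<tau>. (t - \<tau>) powr (-\<alpha>)) has_integral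
          ((- ((t - t) powr (1 - \<alpha>)) / (1 - \<alpha>)) - (- ((t - c) powr (1 - \<alpha>)) / (1 - \<alpha>)))) {c..t}"
  proof (rule fundamental_theorem_of_calculus_interior)
    show "continuous_on {c..t} (\<lambda>\<tau>. - ((t - \<tau>) powr (1 - \<alpha>)) / (1 - \<alpha>))"
      using assms by (intro continuous_intros continuous_on_powr') auto
    fix \<tau> assume "\<tau> \<in> {c<..<t}"
    then have "t - \<tau> > 0" by auto
    show "((\<lambda>\<tau>. - ((t - \<tau>) powr (1 - \<alpha>)) / (1 - \<alpha>)) has_vector_derivative (t - \<tau>) powr (- \<alpha>)) (at \<tau>)"
      unfolding has_real_derivative_iff_has_vector_derivative[symmetric]
      using DERIV_cdivide[OF DERIV_minus[OF d2[OF \<open>t - \<tau> > 0\<close>, of "1-\<alpha>" UNIV]], of "1-\<alpha>"] assms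
      by (auto elim!: DERIV_cong simp: field_simps)
  qed (use assms in auto)
  then show ?thesis using assms by simp
qed

lemma powr_kernel_absint:
  fixes c t \<alpha> :: real
  assumes "c \<le> t" "\<alpha> < 1" "continuous_on {c..t} f"
  shows "(\<lambda>\<tau>. f \<tau> * (t - \<tau>) powr (-\<alpha>)) absolutely_integrable_on {c..t}"
proof (rule absolutely_integrable_bounded_measurable_product_real)
  show "f \<in> borel_measurable (lebesgue_on {c..t})"
    using assms by (intro continuous_imp_measurable_on_sets_lebesgue) auto
  show "bounded (f ` {c..t})"
    using assms by (intro compact_imp_bounded compact_continuous_image) auto
  show "(\<lambda>\<tau>. (t - \<tau>) powr (-\<alpha>)) absolutely_integrable_on {c..t}"
    using powr_kernel_has_integral[OF assms(1,2)]
    by (intro nonnegative_absolutely_integrable_1) (auto simp: has_integral_integrable)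
qed auto

lemma powr_kernel_absint':
  fixes c t \<alpha> :: real
  assumes "t \<le> c" "\<alpha> < 1" "continuous_on {t..c} f"
  shows "(\<lambda>\<tau>. f \<tau> * (\<tau> - t) powr (-\<alpha>)) absolutely_integrable_on {t..c}"
proof (rule absolutely_integrable_bounded_measurable_product_real)
  show "f \<in> borel_measurable (lebesgue_on {t..c})"
    using assms by (intro continuous_imp_measurable_on_sets_lebesgue) auto
  show "bounded (f ` {t..c})"
    using assms by (intro compact_imp_bounded compact_continuous_image) auto
  have "((\<lambda>\<tau>. (\<tau> - t) powr (-\<alpha>)) has_integral (c - t) powr (1 - \<alpha>) / (1 - \<alpha>)) {t..c}"
  proof -
    have "((\<lambda>\<tau>. (\<tau> - t) powr (-\<alpha>)) has_integral
          (((c - t) powr (1 - \<alpha>) / (1 - \<alpha>)) - ((t - t) powr (1 - \<alpha>) / (1 - \<alpha>)))) {t..c}"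
    proof (rule fundamental_theorem_of_calculus_interior)
      show "continuous_on {t..c} (\<lambda>\<tau>. (\<tau> - t) powr (1 - \<alpha>) / (1 - \<alpha>))"
        using assms by (intro continuous_intros continuous_on_powr') auto
      fix \<tau> assume "\<tau> \<in> {t<..<c}"
      then have "\<tau> - t > 0" by auto
      show "((\<lambda>\<tau>. (\<tau> - t) powr (1 - \<alpha>) / (1 - \<alpha>)) has_vector_derivative (\<tau> - t) powr (- \<alpha>)) (at \<tau>)"
        unfolding has_real_derivative_iff_has_vector_derivative[symmetric]
        using DERIV_cdivide[OF d1[OF \<open>\<tau> - t > 0\<close>, of "1-\<alpha>" UNIV], of "1-\<alpha>"] assms
        by (auto elim!: DERIV_cong)
    qed (use assms in auto)
    then show ?thesis using assms by simp
  qed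
  then show "(\<lambda>\<tau>. (\<tau> - t) powr (-\<alpha>)) absolutely_integrable_on {t..c}"
    by (intro nonnegative_absolutely_integrable_1) (auto simp: has_integral_integrable)
qed auto

lemma meas_cont_ind:
  fixes f :: "real \<Rightarrow> real"
  assumes "continuous_on {c..d} f"
  shows "(\<lambda>x. indicator {c..d} x * f x) \<in> borel_measurable borel"
  using borel_measurable_continuous_on_indicator[OF _ assms] by simp

lemma seti_kernel:
  fixes f :: "real \<Rightarrow> real"
  assumes "c \<le> t" "\<alpha> < 1" "continuous_on {c..t} f"
  shows "set_integrable lborel {c..t} (\<lambda>\<tau>. f \<tau> * (t - \<tau>) powr (-\<alpha>))"
proof -
  have ai: "set_integrable lebesgue {c..t} (\<lambda>\<tau>. f \<tau> * (t - \<tau>) powr (-\<alpha>))"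
    using powr_kernel_absint[OF assms] .
  have m: "(\<lambda>\<tau>. indicator {c..t} \<tau> *\<^sub>R (f \<tau> * (t - \<tau>) powr (-\<alpha>))) \<in> borel_measurable borel"
  proof -
    have "(\<lambda>\<tau>. (indicator {c..t} \<tau> * f \<tau>) * (t - \<tau>) powr (-\<alpha>)) \<in> borel_measurable borel"
      using meas_cont_ind[OF assms(3)] by measurable
    then show ?thesis by (simp add: mult_ac)
  qed
  show ?thesis using ai m unfolding set_integrable_def
    by (subst (asm) integrable_completion) (auto simp: measurable_lborel1)
qed

lemma seti_kernel':
  fixes f :: "real \<Rightarrow> real"
  assumes "t \<le> c" "\<alpha> < 1" "continuous_on {t..c} f"
  shows "set_integrable lborel {t..c} (\<lambda>\<tau>. f \<tau> * (\<tau> - t) powr (-\<alpha>))"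
proof -
  have ai: "set_integrable lebesgue {t..c} (\<lambda>\<tau>. f \<tau> * (\<tau> - t) powr (-\<alpha>))"
    using powr_kernel_absint'[OF assms] .
  have m: "(\<lambda>\<tau>. indicator {t..c} \<tau> *\<^sub>R (f \<tau> * (\<tau> - t) powr (-\<alpha>))) \<in> borel_measurable borel"
  proof -
    have "(\<lambda>\<tau>. (indicator {t..c} \<tau> * f \<tau>) * (\<tau> - t) powr (-\<alpha>)) \<in> borel_measurable borel"
      using meas_cont_ind[OF assms(3)] by measurable
    then show ?thesis by (simp add: mult_ac)
  qed
  show ?thesis using ai m unfolding set_integrable_def
    by (subst (asm) integrable_completion) (auto simp: measurable_lborel1)
qed

lemma tri_swap:
  fixes f g :: "real \<Rightarrow> real"
  assumes ab: "a \<le> b" and al: "\<alpha> < 1" and cf: "continuous_on {a..b} f" and cg: "continuous_on {a..b} g"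
  shows "integral {a..b} (\<lambda>t. g t * integral {a..t} (\<lambda>\<tau>. f \<tau> * (t - \<tau>) powr (-\<alpha>)))
       = integral {a..b} (\<lambda>\<tau>. f \<tau> * integral {\<tau>..b} (\<lambda>t. g t * (t - \<tau>) powr (-\<alpha>)))"
proof -
  define T where "T = {(t::real, \<tau>::real). a \<le> \<tau> \<and> \<tau> \<le> t \<and> t \<le> b}"
  have "T = {p. a \<le> snd p \<and> snd p \<le> fst p \<and> fst p \<le> b}" unfolding T_def by auto
  then have Tc: "closed T"
    by (simp only:) (intro closed_Collect_conj closed_Collect_le continuous_intros) 
  then have Tb[measurable]: "T \<in> sets borel" by simp
  define G where "G = (\<lambda>t \<tau>. indicator T (t, \<tau>) * (t - \<tau>) powr (-\<alpha>) :: real)"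
  define F where "F = (\<lambda>t \<tau>. (indicator {a..b} t * g t) * (indicator {a..b} \<tau> * f \<tau>) * G t \<tau>)"
  have mg[measurable]: "(\<lambda>x. indicator {a..b} x * g x) \<in> borel_measurable borel" by (rule meas_cont_ind[OF cg])
  have mf[measurable]: "(\<lambda>x. indicator {a..b} x * f x) \<in> borel_measurable borel" by (rule meas_cont_ind[OF cf])
  have mG: "(\<lambda>p. G (fst p) (snd p)) \<in> borel_measurable (lborel \<Otimes>\<^sub>M lborel)"
    unfolding G_def by measurable
  have mF: "(\<lambda>p. F (fst p) (snd p)) \<in> borel_measurable (lborel \<Otimes>\<^sub>M lborel)"
    unfolding F_def G_def by measurable
  have Gin: "G t \<tau> = indicator {a..b} t * (indicator {a..t} \<tau> * (t - \<tau>) powr (-\<alpha>))" for t \<tau>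
    by (auto simp: G_def T_def indicator_def)
  have inner: "(\<integral>\<^sup>+\<tau>. ennreal (norm (G t \<tau>)) \<partial>lborel)
        = ennreal (indicator {a..b} t * ((t - a) powr (1 - \<alpha>) / (1 - \<alpha>)))" for t
  proof (cases "t \<in> {a..b}")
    case True
    have "(\<integral>\<^sup>+\<tau>. ennreal (norm (G t \<tau>)) \<partial>lborel) = (\<integral>\<^sup>+\<tau>. ennreal (indicator {a..t} \<tau> * (t - \<tau>) powr (-\<alpha>)) \<partial>lborel)"
      using True by (intro nn_integral_cong) (auto simp: Gin indicator_def)
    also have "\<dots> = ennreal ((t - a) powr (1 - \<alpha>) / (1 - \<alpha>))"
      using True by (intro nn_integral_has_integral_lebesgue powr_kernel_has_integral al) auto
    finally show ?thesis using True by simp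
  next
    case False
    then show ?thesis by (simp add: Gin)
  qed
  have intG: "integrable (lborel \<Otimes>\<^sub>M lborel) (\<lambda>p. G (fst p) (snd p))"
  proof (rule integrableI_bounded[OF mG])
    have "(\<integral>\<^sup>+ p. ennreal (norm (G (fst p) (snd p))) \<partial>(lborel \<Otimes>\<^sub>M lborel))
        = (\<integral>\<^sup>+t. (\<integral>\<^sup>+\<tau>. ennreal (norm (G t \<tau>)) \<partial>lborel) \<partial>lborel)"
      using mG by (subst lborel.nn_integral_fst[symmetric]) auto
    also have "\<dots> = (\<integral>\<^sup>+t. ennreal (indicator {a..b} t * ((t - a) powr (1 - \<alpha>) / (1 - \<alpha>))) \<partial>lborel)"
      by (rule nn_integral_cong) (rule inner)
    also have "\<dots> \<le> (\<integral>\<^sup>+t. ennreal (indicator {a..b} t * ((b - a) powr (1 - \<alpha>) / (1 - \<alpha>))) \<partial>lborel)"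
      using al by (intro nn_integral_mono ennreal_leI) (auto simp: indicator_def intro!: divide_right_mono powr_mono2)
    also have "\<dots> = ennreal ((b - a) * ((b - a) powr (1 - \<alpha>) / (1 - \<alpha>)))"
      using al ab by (intro nn_integral_has_integral_lebesgue) (auto intro!: has_integral_const_real[THEN has_integral_eq_rhs])
    also have "\<dots> < \<infinity>" by simp
    finally show "(\<integral>\<^sup>+ p. ennreal (norm (G (fst p) (snd p))) \<partial>(lborel \<Otimes>\<^sub>M lborel)) < \<infinity>" .
  qed
  obtain Mg where Mg: "\<And>t. t \<in> {a..b} \<Longrightarrow> \<bar>g t\<bar> \<le> Mg"
    using compact_imp_bounded[OF compact_continuous_image[OF cg compact_Icc]] by (auto simp: bounded_iff) (meson atLeastAtMost_iff)
  obtain Mf where Mf: "\<And>t. t \<in> {a..b} \<Longrightarrow> \<bar>f t\<bar> \<le> Mf"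
    using compact_imp_bounded[OF compact_continuous_image[OF cf compact_Icc]] by (auto simp: bounded_iff) (meson atLeastAtMost_iff)
  have intF: "integrable (lborel \<Otimes>\<^sub>M lborel) (\<lambda>p. F (fst p) (snd p))"
  proof (rule Bochner_Integration.integrable_bound[OF integrable_mult_right[OF intG, of "Mg * Mf"] mF])
    show "AE p in lborel \<Otimes>\<^sub>M lborel. norm (F (fst p) (snd p)) \<le> norm (Mg * Mf * G (fst p) (snd p))"
    proof (rule AE_I2)
      fix p :: "real \<times> real"
      obtain t \<tau> where p: "p = (t, \<tau>)" by fastforce
      have G0: "G t \<tau> \<ge> 0" by (simp add: G_def)
      show "norm (F (fst p) (snd p)) \<le> norm (Mg * Mf * G (fst p) (snd p))"
      proof (cases "t \<in> {a..b} \<and> \<tau> \<in> {a..b}")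
        case True
        have "0 \<le> Mg" "0 \<le> Mf" using Mg[of t] Mf[of t] True by auto
        then have "\<bar>g t * f \<tau> * G t \<tau>\<bar> \<le> Mg * Mf * G t \<tau>"
          using Mg Mf True G0 by (auto simp: abs_mult intro!: mult_mono)
        then show ?thesis using True G0 \<open>0 \<le> Mg\<close> \<open>0 \<le> Mf\<close> by (simp add: p F_def abs_mult)
      next
        case False
        then show ?thesis by (auto simp: p F_def)
      qed
    qed
  qed
  have intF': "integrable (lborel \<Otimes>\<^sub>M lborel) (case_prod F)"
    using intF by (simp add: case_prod_beta')
  have fub: "(\<integral>\<tau>. (\<integral>t. F t \<tau> \<partial>lborel) \<partial>lborel) = (\<integral>t. (\<integral>\<tau>. F t \<tau> \<partial>lborel) \<partial>lborel)"
    by (rule lborel_pair.Fubini_integral[OF intF'])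
  define \<Phi> where "\<Phi> = (\<lambda>t. g t * integral {a..t} (\<lambda>\<tau>. f \<tau> * (t - \<tau>) powr (-\<alpha>)))"
  define \<Psi> where "\<Psi> = (\<lambda>\<tau>. f \<tau> * integral {\<tau>..b} (\<lambda>t. g t * (t - \<tau>) powr (-\<alpha>)))"
  have in1: "(\<integral>\<tau>. F t \<tau> \<partial>lborel) = indicator {a..b} t *\<^sub>R \<Phi> t" for t
  proof (cases "t \<in> {a..b}")
    case True
    have cf': "continuous_on {a..t} f" using True by (auto intro: continuous_on_subset[OF cf])
    have "(\<integral>\<tau>. F t \<tau> \<partial>lborel) = (\<integral>\<tau>. g t * (indicator {a..t} \<tau> *\<^sub>R (f \<tau> * (t - \<tau>) powr (-\<alpha>))) \<partial>lborel)"
      using True by (intro Bochner_Integration.integral_cong) (auto simp: F_def Gin indicator_def)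
    also have "\<dots> = g t * (LINT \<tau>:{a..t}|lborel. f \<tau> * (t - \<tau>) powr (-\<alpha>))"
      by (simp add: set_lebesgue_integral_def)
    also have "\<dots> = g t * integral {a..t} (\<lambda>\<tau>. f \<tau> * (t - \<tau>) powr (-\<alpha>))"
      using set_borel_integral_eq_integral(2)[OF seti_kernel[OF _ al cf']] True by simp
    finally show ?thesis using True by (simp add: \<Phi>_def)
  next
    case False
    then show ?thesis by (simp add: F_def)
  qed
  have in2: "(\<integral>t. F t \<tau> \<partial>lborel) = indicator {a..b} \<tau> *\<^sub>R \<Psi> \<tau>" for \<tau>
  proof (cases "\<tau> \<in> {a..b}")
    case True
    have cg': "continuous_on {\<tau>..b} g" using True by (auto intro: continuous_on_subset[OF cg])
    have "(\<integral>t. F t \<tau> \<partial>lborel) = (\<integral>t. f \<tau> * (indicator {\<tau>..b} t *\<^sub>R (g t * (t - \<tau>) powr (-\<alpha>))) \<partial>lborel)"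
      using True by (intro Bochner_Integration.integral_cong) (auto simp: F_def Gin indicator_def)
    also have "\<dots> = f \<tau> * (LINT t:{\<tau>..b}|lborel. g t * (t - \<tau>) powr (-\<alpha>))"
      by (simp add: set_lebesgue_integral_def)
    also have "\<dots> = f \<tau> * integral {\<tau>..b} (\<lambda>t. g t * (t - \<tau>) powr (-\<alpha>))"
      using set_borel_integral_eq_integral(2)[OF seti_kernel'[OF _ al cg']] True by simp
    finally show ?thesis using True by (simp add: \<Psi>_def)
  next
    case False
    then show ?thesis by (simp add: F_def)
  qed
  have i1: "set_integrable lborel {a..b} \<Phi>"
    using lborel_pair.integrable_fst[OF intF'] unfolding set_integrable_def by (simp add: in1)
  have i2: "set_integrable lborel {a..b} \<Psi>"
    using lborel_pair.integrable_snd[OF intF'] unfolding set_integrable_def by (simp add: in2)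
  have "integral {a..b} \<Phi> = (LINT t:{a..b}|lborel. \<Phi> t)"
    using set_borel_integral_eq_integral(2)[OF i1] by simp
  also have "\<dots> = (\<integral>t. (\<integral>\<tau>. F t \<tau> \<partial>lborel) \<partial>lborel)"
    by (simp add: in1 set_lebesgue_integral_def)
  also have "\<dots> = (\<integral>\<tau>. (\<integral>t. F t \<tau> \<partial>lborel) \<partial>lborel)" by (rule fub[symmetric])
  also have "\<dots> = (LINT \<tau>:{a..b}|lborel. \<Psi> \<tau>)"
    by (simp add: in2 set_lebesgue_integral_def)
  also have "\<dots> = integral {a..b} \<Psi>"
    using set_borel_integral_eq_integral(2)[OF i2] by simp
  finally show ?thesis by (simp add: \<Phi>_def \<Psi>_def)
qed

lemma C1_cont: "C1_on a b f \<Longrightarrow> continuous_on {a..b} f"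
  unfolding C1_on_def continuous_on_eq_continuous_within
  by (metis has_vector_derivative_continuous)

lemma C1_cong:
  assumes "\<And>t. t \<in> {a..b} \<Longrightarrow> f t = g t" "C1_on a b f"
  shows "C1_on a b g"
  using assms unfolding C1_on_def
  by (metis has_vector_derivative_transform)

lemma C1_add:
  assumes "C1_on a b f" "C1_on a b g"
  shows "C1_on a b (\<lambda>s. f s + c *\<^sub>R g s)"
proof -
  obtain f' where f': "continuous_on {a..b} f'" "\<And>t. t \<in> {a..b} \<Longrightarrow> (f has_vector_derivative f' t) (at t within {a..b})"
    using assms(1) unfolding C1_on_def by blast
  obtain g' where g': "continuous_on {a..b} g'" "\<And>t. t \<in> {a..b} \<Longrightarrow> (g has_vector_derivative g' t) (at t within {a..b})"
    using assms(2) unfolding C1_on_def by blast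
  show ?thesis unfolding C1_on_def
    by (rule exI[of _ "\<lambda>t. f' t + c *\<^sub>R g' t"]) (auto intro!: continuous_intros f' g' derivative_eq_intros)
qed

lemma C1_comp:
  fixes x :: "real \<Rightarrow> real^'n"
  assumes "C1_on a b x"
  shows "C1_on a b (\<lambda>s. x s $ j)"
proof -
  obtain f' where f': "continuous_on {a..b} f'" "\<And>t. t \<in> {a..b} \<Longrightarrow> (x has_vector_derivative f' t) (at t within {a..b})"
    using assms unfolding C1_on_def by blast
  have "((\<lambda>s. x s $ j) has_vector_derivative f' t $ j) (at t within {a..b})" if "t \<in> {a..b}" for t
  proof -
    have "((\<lambda>s. x s $ j) has_derivative (\<lambda>h. (h *\<^sub>R f' t) $ j)) (at t within {a..b})"
      using bounded_linear.has_derivative[OF bounded_linear_vec_nth f'(2)[OF that, unfolded has_vector_derivative_def]] .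
    then show ?thesis unfolding has_vector_derivative_def by simp
  qed
  moreover have "continuous_on {a..b} (\<lambda>t. f' t $ j)" by (intro continuous_intros f')
  ultimately show ?thesis unfolding C1_on_def by blast
qed

lemma C1_vd:
  fixes f :: "real \<Rightarrow> real"
  assumes "C1_on a b f"
  obtains f' where "continuous_on {a..b} f'"
    "\<And>t \<tau>. t \<in> {a..b} \<Longrightarrow> a < t \<Longrightarrow> \<tau> \<in> {a..t} \<Longrightarrow> vector_derivative f (at \<tau> within {a..t}) = f' \<tau>"
proof -
  obtain f' where f': "continuous_on {a..b} f'" "\<And>t. t \<in> {a..b} \<Longrightarrow> (f has_vector_derivative f' t) (at t within {a..b})"
    using assms unfolding C1_on_def by blast
  have "vector_derivative f (at \<tau> within {a..t}) = f' \<tau>" if "t \<in> {a..b}" "a < t" "\<tau> \<in> {a..t}" for t \<tau>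
  proof (rule vector_derivative_within_closed_interval)
    show "(f has_vector_derivative f' \<tau>) (at \<tau> within {a..t})"
      using that by (intro has_vector_derivative_within_subset[OF f'(2)]) auto
  qed (use that in auto)
  then show ?thesis using that f'(1) by blast
qed

lemma integral_cmult_real: "integral S (\<lambda>x. c * f x) = c * integral S (f :: _ \<Rightarrow> real)"
  using integral_cmul[of S c f] by simp

lemma caputo_lin:
  fixes f g :: "real \<Rightarrow> real"
  assumes f: "C1_on a b f" and g: "C1_on a b g" and t: "t \<in> {a..b}" and al: "\<alpha> < 1"
  shows "caputo \<alpha> a (\<lambda>s. f s + c * g s) t = caputo \<alpha> a f t + c * caputo \<alpha> a g t"
proof (cases "a < t")
  case False
  then have "t = a" using t by auto
  then show ?thesis by (simp add: caputo_def)
next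
  case True
  obtain f' where f': "continuous_on {a..b} f'"
    "\<And>t \<tau>. t \<in> {a..b} \<Longrightarrow> a < t \<Longrightarrow> \<tau> \<in> {a..t} \<Longrightarrow> vector_derivative f (at \<tau> within {a..t}) = f' \<tau>"
    using C1_vd[OF f] by blast
  obtain g' where g': "continuous_on {a..b} g'"
    "\<And>t \<tau>. t \<in> {a..b} \<Longrightarrow> a < t \<Longrightarrow> \<tau> \<in> {a..t} \<Longrightarrow> vector_derivative g (at \<tau> within {a..t}) = g' \<tau>"
    using C1_vd[OF g] by blast
  have fg: "C1_on a b (\<lambda>s. f s + c *\<^sub>R g s)" by (rule C1_add[OF f g])
  obtain h' where h': "continuous_on {a..b} h'"
    "\<And>t \<tau>. t \<in> {a..b} \<Longrightarrow> a < t \<Longrightarrow> \<tau> \<in> {a..t} \<Longrightarrow> vector_derivative (\<lambda>s. f s + c *\<^sub>R g s) (at \<tau> within {a..t}) = h' \<tau>"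
    using C1_vd[OF fg] by blast
  have hv: "h' \<tau> = f' \<tau> + c * g' \<tau>" if "\<tau> \<in> {a..t}" for \<tau>
  proof -
    obtain F' where F': "continuous_on {a..b} F'" "\<And>t. t \<in> {a..b} \<Longrightarrow> (f has_vector_derivative F' t) (at t within {a..b})"
      using f unfolding C1_on_def by blast
    obtain G' where G': "continuous_on {a..b} G'" "\<And>t. t \<in> {a..b} \<Longrightarrow> (g has_vector_derivative G' t) (at t within {a..b})"
      using g unfolding C1_on_def by blast
    have tb: "\<tau> \<in> {a..b}" using that t by auto
    have "((\<lambda>s. f s + c *\<^sub>R g s) has_vector_derivative F' \<tau> + c *\<^sub>R G' \<tau>) (at \<tau> within {a..t})"
      using has_vector_derivative_within_subset[OF F'(2)[OF tb], of "{a..t}"]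
        has_vector_derivative_within_subset[OF G'(2)[OF tb], of "{a..t}"] t
      by (auto intro!: derivative_eq_intros)
    then have "vector_derivative (\<lambda>s. f s + c *\<^sub>R g s) (at \<tau> within {a..t}) = F' \<tau> + c *\<^sub>R G' \<tau>"
      using True that by (intro vector_derivative_within_closed_interval) auto
    moreover have "vector_derivative f (at \<tau> within {a..t}) = F' \<tau>"
      using True that has_vector_derivative_within_subset[OF F'(2)[OF tb], of "{a..t}"] t
      by (intro vector_derivative_within_closed_interval) auto
    moreover have "vector_derivative g (at \<tau> within {a..t}) = G' \<tau>"
      using True that has_vector_derivative_within_subset[OF G'(2)[OF tb], of "{a..t}"] t
      by (intro vector_derivative_within_closed_interval) auto
    ultimately show ?thesis using h'(2)[OF t True that] f'(2)[OF t True that] g'(2)[OF t True that] by simp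
  qed
  have cf: "continuous_on {a..t} f'" "continuous_on {a..t} g'"
    using f'(1) g'(1) t by (auto intro: continuous_on_subset)
  have if1: "(\<lambda>\<tau>. (t - \<tau>) powr (-\<alpha>) * f' \<tau>) integrable_on {a..t}"
    using set_lebesgue_integral_eq_integral(1)[OF powr_kernel_absint[OF _ al cf(1)]] True by (simp add: mult.commute)
  have ig1: "(\<lambda>\<tau>. (t - \<tau>) powr (-\<alpha>) * g' \<tau>) integrable_on {a..t}"
    using set_lebesgue_integral_eq_integral(1)[OF powr_kernel_absint[OF _ al cf(2)]] True by (simp add: mult.commute)
  have "integral {a..t} (\<lambda>\<tau>. (t - \<tau>) powr (-\<alpha>) * vector_derivative (\<lambda>s. f s + c * g s) (at \<tau> within {a..t}))
      = integral {a..t} (\<lambda>\<tau>. (t - \<tau>) powr (-\<alpha>) * f' \<tau> + c * ((t - \<tau>) powr (-\<alpha>) * g' \<tau>))"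
    using h'(2)[OF t True] hv by (intro integral_cong) (simp add: algebra_simps)
  also have "\<dots> = integral {a..t} (\<lambda>\<tau>. (t - \<tau>) powr (-\<alpha>) * f' \<tau>) + c * integral {a..t} (\<lambda>\<tau>. (t - \<tau>) powr (-\<alpha>) * g' \<tau>)"
    by (rule integral_unique[OF has_integral_add[OF integrable_integral[OF if1] has_integral_mult_right[OF integrable_integral[OF ig1]]]])
  also have "integral {a..t} (\<lambda>\<tau>. (t - \<tau>) powr (-\<alpha>) * f' \<tau>) = integral {a..t} (\<lambda>\<tau>. (t - \<tau>) powr (-\<alpha>) * vector_derivative f (at \<tau> within {a..t}))"
    using f'(2)[OF t True] by (intro integral_cong) simp
  also have "integral {a..t} (\<lambda>\<tau>. (t - \<tau>) powr (-\<alpha>) * g' \<tau>) = integral {a..t} (\<lambda>\<tau>. (t - \<tau>) powr (-\<alpha>) * vector_derivative g (at \<tau> within {a..t}))"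
    using g'(2)[OF t True] by (intro integral_cong) simp
  finally show ?thesis unfolding caputo_def by (simp add: algebra_simps)
qed

lemma caputo_zero:
  assumes "a \<le> t"
  shows "caputo \<alpha> a (\<lambda>s. 0) t = 0"
proof (cases "a < t")
  case False
  then show ?thesis using assms by (simp add: caputo_def)
next
  case True
  have "vector_derivative (\<lambda>s. 0::real) (at \<tau> within {a..t}) = 0" if "\<tau> \<in> {a..t}" for \<tau>
    using True that by (intro vector_derivative_within_closed_interval) (auto intro: derivative_eq_intros)
  then show ?thesis unfolding caputo_def by (subst integral_cong[where g="\<lambda>_. 0"]) auto
qed

lemma mono_int:
  fixes a t \<alpha> :: real
  assumes at: "a < t" and al: "0 < \<alpha>" "\<alpha> < 1" and n: "2 \<le> n"
  shows "((\<lambda>\<tau>. (t - \<tau>) powr (-\<alpha>) * (\<tau> - a) ^ (n - 1)) has_integral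
           Beta (real n) (1 - \<alpha>) * (t - a) powr (real n - \<alpha>)) {a..t}"
proof -
  define h where "h = t - a"
  have h: "h > 0" using at by (simp add: h_def)
  have B: "((\<lambda>u. u powr (real n - 1) * (1 - u) powr ((1 - \<alpha>) - 1)) has_integral Beta (real n) (1 - \<alpha>)) (cbox 0 1)"
    using has_integral_Beta_real[of "real n" "1 - \<alpha>"] n al by simp
  from has_integral_affinity[OF B, of "1/h" "-a/h"] h
  have A: "((\<lambda>\<tau>. ((1/h) * \<tau> + - a / h) powr (real n - 1) * (1 - ((1/h) * \<tau> + - a / h)) powr ((1 - \<alpha>) - 1))
           has_integral h * Beta (real n) (1 - \<alpha>)) ((\<lambda>x. h * x + a) ` {0..1})"
    by (simp add: field_simps)
  have img: "(\<lambda>x. h * x + a) ` {0..1} = {a..t}"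
    using h by (subst image_affinity_atLeastAtMost) (auto simp: h_def)
  have eq: "(t - \<tau>) powr (-\<alpha>) * (\<tau> - a) ^ (n - 1) =
      h powr (real n - 1 - \<alpha>) * (((1/h) * \<tau> + - a / h) powr (real n - 1) * (1 - ((1/h) * \<tau> + - a / h)) powr ((1 - \<alpha>) - 1))"
    if "\<tau> \<in> {a..t}" for \<tau>
  proof -
    have e1: "(1/h) * \<tau> + - a / h = (\<tau> - a) / h" using h by (simp add: field_simps)
    have e2: "1 - (\<tau> - a) / h = (t - \<tau>) / h" using h by (simp add: field_simps h_def)
    have p1: "(\<tau> - a) powr (real n - 1) = (\<tau> - a) ^ (n - 1)"
    proof (cases "\<tau> = a")
      case True then show ?thesis using n by simp
    next
      case False then have "\<tau> - a > 0" using that by auto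
      then show ?thesis using n by (simp add: powr_realpow[symmetric] of_nat_diff)
    qed
    have "h powr (real n - 1 - \<alpha>) * (((\<tau> - a) / h) powr (real n - 1) * ((t - \<tau>) / h) powr (- \<alpha>))
        = h powr (real n - 1 - \<alpha>) * ((\<tau> - a) powr (real n - 1) / h powr (real n - 1) * ((t - \<tau>) powr (- \<alpha>) / h powr (-\<alpha>)))"
      using that h by (simp add: powr_divide)
    also have "\<dots> = (h powr (real n - 1 - \<alpha>) / (h powr (real n - 1) * h powr (-\<alpha>))) * ((\<tau> - a) powr (real n - 1) * (t - \<tau>) powr (- \<alpha>))"
      by (simp add: field_simps)
    also have "h powr (real n - 1) * h powr (-\<alpha>) = h powr (real n - 1 - \<alpha>)"
      by (simp add: powr_add[symmetric])
    also have "h powr (real n - 1 - \<alpha>) / h powr (real n - 1 - \<alpha>) = 1" using h by simp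
    finally have "h powr (real n - 1 - \<alpha>) * (((\<tau> - a) / h) powr (real n - 1) * ((t - \<tau>) / h) powr (- \<alpha>)) = (t - \<tau>) powr (-\<alpha>) * (\<tau> - a) ^ (n - 1)"
      using p1 by (simp only: mult.commute)
    moreover have "(1 - \<alpha> - 1) = - \<alpha>" by simp
    ultimately show ?thesis unfolding e1 e2 by simp
  qed
  have "((\<lambda>\<tau>. h powr (real n - 1 - \<alpha>) * (((1/h) * \<tau> + - a / h) powr (real n - 1) * (1 - ((1/h) * \<tau> + - a / h)) powr ((1 - \<alpha>) - 1)))
        has_integral h powr (real n - 1 - \<alpha>) * (h * Beta (real n) (1 - \<alpha>))) {a..t}"
    using has_integral_mult_right[OF A] img by simp
  moreover have "h powr (real n - 1 - \<alpha>) * (h * Beta (real n) (1 - \<alpha>)) = Beta (real n) (1 - \<alpha>) * (t - a) powr (real n - \<alpha>)"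
  proof -
    have "h powr (real n - 1 - \<alpha>) * h = h powr (real n - \<alpha>)"
      using h by (simp add: powr_add[symmetric] powr_diff)
    then show ?thesis by (simp add: h_def mult_ac)
  qed
  ultimately have "((\<lambda>\<tau>. h powr (real n - 1 - \<alpha>) * (((1/h) * \<tau> + - a / h) powr (real n - 1) * (1 - ((1/h) * \<tau> + - a / h)) powr ((1 - \<alpha>) - 1)))
        has_integral Beta (real n) (1 - \<alpha>) * (t - a) powr (real n - \<alpha>)) {a..t}" by simp
  then show ?thesis
    by (rule has_integral_eq[rotated]) (rule eq[symmetric])
qed

lemma powr_deriv_right:
  fixes a t r :: real
  assumes r: "r > 1" and t: "a \<le> t"
  shows "((\<lambda>s. (s - a) powr r) has_real_derivative r * (t - a) powr (r - 1)) (at t within {a..})"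
proof (cases "a < t")
  case True
  have "((\<lambda>s. s - a) has_real_derivative 1) (at t within {a..})" by (auto intro!: derivative_eq_intros)
  from DERIV_chain2[OF has_real_derivative_powr[of "t - a" r] this] True show ?thesis by simp
next
  case False
  then have ta: "t = a" using t by simp
  have c: "continuous_on {a..} (\<lambda>y. (y - a) powr (r - 1))"
    using r by (intro continuous_on_powr' continuous_intros) auto
  then have l: "((\<lambda>y. (y - a) powr (r - 1)) \<longlongrightarrow> (a - a) powr (r - 1)) (at a within {a..})"
    using continuous_on_def[THEN iffD1, OF c] by (auto dest: bspec[of _ _ a])
  have "((\<lambda>y. ((y - a) powr r - (a - a) powr r) / (y - a)) \<longlongrightarrow> 0) (at a within {a..})"
  proof (rule Lim_transform_within[OF _ zero_less_one])
    show "((\<lambda>y. (y - a) powr (r - 1)) \<longlongrightarrow> 0) (at a within {a..})" using l by simp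
    fix y assume "y \<in> {a..}" "0 < dist y a" "dist y a < 1"
    then have "y - a > 0" by auto
    then show "(y - a) powr (r - 1) = ((y - a) powr r - (a - a) powr r) / (y - a)"
      by (simp add: powr_diff)
  qed
  then show ?thesis using ta r by (simp add: has_field_derivative_iff)
qed

definition psi :: "nat \<Rightarrow> real \<Rightarrow> real \<Rightarrow> real \<Rightarrow> real" where
  "psi m a b s = (b - a) * (s - a) ^ m - (s - a) ^ Suc m"

definition dpsi :: "nat \<Rightarrow> real \<Rightarrow> real \<Rightarrow> real \<Rightarrow> real" where
  "dpsi m a b s = (b - a) * (real m * (s - a) ^ (m - 1)) - real (Suc m) * (s - a) ^ m"

lemma psi_deriv: "m \<ge> 1 \<Longrightarrow> (psi m a b has_real_derivative dpsi m a b s) (at s within S)"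
  unfolding psi_def dpsi_def
  by (auto intro!: derivative_eq_intros simp del: power_Suc)

lemma psi_ends: "psi m a b b = 0" "m \<ge> 1 \<Longrightarrow> psi m a b a = 0"
  by (auto simp: psi_def)

definition Cpsi :: "real \<Rightarrow> nat \<Rightarrow> real \<Rightarrow> real \<Rightarrow> real \<Rightarrow> real" where
  "Cpsi \<alpha> m a b t = (1 / Gamma (1 - \<alpha>)) *
     ((b - a) * real m * Beta (real m) (1 - \<alpha>) * (t - a) powr (real m - \<alpha>)
      - real (Suc m) * Beta (real (Suc m)) (1 - \<alpha>) * (t - a) powr (real (Suc m) - \<alpha>))"

lemma caputo_psi:
  assumes al: "0 < \<alpha>" "\<alpha> < 1" and m: "2 \<le> m" and t: "a \<le> t"
  shows "caputo \<alpha> a (psi m a b) t = Cpsi \<alpha> m a b t"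
proof (cases "a < t")
  case False
  then have "t = a" using t by simp
  then show ?thesis using al m by (simp add: caputo_def Cpsi_def)
next
  case True
  have vd: "vector_derivative (psi m a b) (at \<tau> within {a..t}) = dpsi m a b \<tau>" if "\<tau> \<in> {a..t}" for \<tau>
    using True that m psi_deriv[of m a b \<tau> "{a..t}"]
    by (intro vector_derivative_within_closed_interval) (auto simp: has_real_derivative_iff_has_vector_derivative)
  have i1: "((\<lambda>\<tau>. (t - \<tau>) powr (-\<alpha>) * (\<tau> - a) ^ (m - 1)) has_integral Beta (real m) (1 - \<alpha>) * (t - a) powr (real m - \<alpha>)) {a..t}"
    using mono_int[OF True al m] .
  have i2: "((\<lambda>\<tau>. (t - \<tau>) powr (-\<alpha>) * (\<tau> - a) ^ (Suc m - 1)) has_integral Beta (real (Suc m)) (1 - \<alpha>) * (t - a) powr (real (Suc m) - \<alpha>)) {a..t}"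
    using mono_int[OF True al, of "Suc m"] m by simp
  have "((\<lambda>\<tau>. (t - \<tau>) powr (-\<alpha>) * dpsi m a b \<tau>) has_integral
     ((b - a) * real m * Beta (real m) (1 - \<alpha>) * (t - a) powr (real m - \<alpha>)
      - real (Suc m) * Beta (real (Suc m)) (1 - \<alpha>) * (t - a) powr (real (Suc m) - \<alpha>))) {a..t}"
    using has_integral_diff[OF has_integral_mult_right[OF i1, of "(b - a) * real m"] has_integral_mult_right[OF i2, of "real (Suc m)"]]
    by (simp add: dpsi_def algebra_simps)
  then have "integral {a..t} (\<lambda>\<tau>. (t - \<tau>) powr (-\<alpha>) * vector_derivative (psi m a b) (at \<tau> within {a..t})) =
     ((b - a) * real m * Beta (real m) (1 - \<alpha>) * (t - a) powr (real m - \<alpha>)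
      - real (Suc m) * Beta (real (Suc m)) (1 - \<alpha>) * (t - a) powr (real (Suc m) - \<alpha>))"
    using vd by (subst integral_cong[of _ _ "\<lambda>\<tau>. (t - \<tau>) powr (-\<alpha>) * dpsi m a b \<tau>"]) (auto intro: integral_unique)
  then show ?thesis by (simp add: caputo_def Cpsi_def)
qed

definition dCpsi :: "real \<Rightarrow> nat \<Rightarrow> real \<Rightarrow> real \<Rightarrow> real \<Rightarrow> real" where
  "dCpsi \<alpha> m a b t = (1 / Gamma (1 - \<alpha>)) *
     ((b - a) * real m * Beta (real m) (1 - \<alpha>) * ((real m - \<alpha>) * (t - a) powr (real m - \<alpha> - 1))
      - real (Suc m) * Beta (real (Suc m)) (1 - \<alpha>) * ((real (Suc m) - \<alpha>) * (t - a) powr (real (Suc m) - \<alpha> - 1)))"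

lemma Cpsi_deriv:
  assumes al: "0 < \<alpha>" "\<alpha> < 1" and m: "2 \<le> m" and t: "a \<le> t"
  shows "(Cpsi \<alpha> m a b has_real_derivative dCpsi \<alpha> m a b t) (at t within {a..})"
proof -
  have r1: "real m - \<alpha> > 1" "real (Suc m) - \<alpha> > 1" using al m by auto
  show ?thesis unfolding Cpsi_def dCpsi_def
    by (rule DERIV_cmult, rule DERIV_diff; rule DERIV_cmult, rule powr_deriv_right) (use r1 t in auto)
qed

lemma dCpsi_cont:
  assumes al: "0 < \<alpha>" "\<alpha> < 1" and m: "2 \<le> m"
  shows "continuous_on {a..b} (dCpsi \<alpha> m a b)"
proof -
  have "continuous_on {a..b} (\<lambda>t. (t - a) powr r)" if "r > 0" for r
    using that by (intro continuous_on_powr' continuous_intros) auto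
  moreover have "real m - \<alpha> - 1 > 0" "real (Suc m) - \<alpha> - 1 > 0" using al m by auto
  ultimately show ?thesis unfolding dCpsi_def
    by (intro continuous_on_mult continuous_on_diff continuous_on_const) auto
qed

lemma caputo_psi_int:
  assumes m: "1 \<le> m" and t: "a \<le> t"
  shows "caputo \<alpha> a (psi m a b) t = (1 / Gamma (1 - \<alpha>)) * integral {a..t} (\<lambda>\<tau>. dpsi m a b \<tau> * (t - \<tau>) powr (-\<alpha>))"
proof (cases "a < t")
  case False
  then have "t = a" using t by simp
  then show ?thesis by (simp add: caputo_def)
next
  case True
  have vd: "vector_derivative (psi m a b) (at \<tau> within {a..t}) = dpsi m a b \<tau>" if "\<tau> \<in> {a..t}" for \<tau>
    using True that m psi_deriv[of m a b \<tau> "{a..t}"]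
    by (intro vector_derivative_within_closed_interval) (auto simp: has_real_derivative_iff_has_vector_derivative)
  show ?thesis unfolding caputo_def
    by (subst integral_cong[of _ _ "\<lambda>\<tau>. dpsi m a b \<tau> * (t - \<tau>) powr (-\<alpha>)"]) (auto simp: vd mult.commute)
qed

lemma frac_ibp:
  fixes G :: "real \<Rightarrow> real"
  assumes ab: "a < b" and al: "0 < \<alpha>" "\<alpha> < 1" and m: "2 \<le> m" and cG: "continuous_on {a..b} G"
    and dI: "\<forall>t\<in>{a..b}. rl_right_int (1 - \<alpha>) b G differentiable (at t within {a..b})"
    and cD: "continuous_on {a..b} (rl_right_deriv \<alpha> a b G)"
  shows "integral {a..b} (\<lambda>t. G t * caputo \<alpha> a (psi m a b) t)
       = integral {a..b} (\<lambda>t. psi m a b t * rl_right_deriv \<alpha> a b G t)"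
proof -
  define Ij where "Ij = rl_right_int (1 - \<alpha>) b G"
  define D where "D = rl_right_deriv \<alpha> a b G"
  have m1: "1 \<le> m" using m by simp
  have cdp: "continuous_on {a..b} (dpsi m a b)" unfolding dpsi_def by (intro continuous_intros)
  have cps: "continuous_on {a..b} (psi m a b)" unfolding psi_def by (intro continuous_intros)
  have "integral {a..b} (\<lambda>t. G t * caputo \<alpha> a (psi m a b) t)
      = integral {a..b} (\<lambda>t. (1 / Gamma (1 - \<alpha>)) * (G t * integral {a..t} (\<lambda>\<tau>. dpsi m a b \<tau> * (t - \<tau>) powr (-\<alpha>))))"
    by (intro integral_cong) (simp add: caputo_psi_int[OF m1])
  also have "\<dots> = (1 / Gamma (1 - \<alpha>)) * integral {a..b} (\<lambda>t. G t * integral {a..t} (\<lambda>\<tau>. dpsi m a b \<tau> * (t - \<tau>) powr (-\<alpha>)))"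
    by (rule integral_cmult_real)
  also have "integral {a..b} (\<lambda>t. G t * integral {a..t} (\<lambda>\<tau>. dpsi m a b \<tau> * (t - \<tau>) powr (-\<alpha>)))
      = integral {a..b} (\<lambda>\<tau>. dpsi m a b \<tau> * integral {\<tau>..b} (\<lambda>t. G t * (t - \<tau>) powr (-\<alpha>)))"
    by (rule tri_swap[OF _ _ cdp cG]) (use ab al in auto)
  also have "(1 / Gamma (1 - \<alpha>)) * \<dots> = integral {a..b} (\<lambda>\<tau>. dpsi m a b \<tau> * Ij \<tau>)"
  proof -
    have e: "integral {\<tau>..b} (\<lambda>s. (s - \<tau>) powr (- \<alpha>) * G s) = integral {\<tau>..b} (\<lambda>t. G t * (t - \<tau>) powr (-\<alpha>))" for \<tau>
      by (intro integral_cong) (simp add: mult.commute)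
    have "integral {a..b} (\<lambda>\<tau>. dpsi m a b \<tau> * Ij \<tau>) = integral {a..b} (\<lambda>\<tau>. (1 / Gamma (1 - \<alpha>)) * (dpsi m a b \<tau> * integral {\<tau>..b} (\<lambda>t. G t * (t - \<tau>) powr (-\<alpha>))))"
      by (intro integral_cong) (simp add: Ij_def rl_right_int_def e)
    also have "\<dots> = (1 / Gamma (1 - \<alpha>)) * integral {a..b} (\<lambda>\<tau>. dpsi m a b \<tau> * integral {\<tau>..b} (\<lambda>t. G t * (t - \<tau>) powr (-\<alpha>)))"
      by (rule integral_cmult_real)
    finally show ?thesis by simp
  qed
  also have "\<dots> = integral {a..b} (\<lambda>t. psi m a b t * D t)"
  proof -
    have dIj: "(Ij has_real_derivative - D t) (at t within {a..b})" if t: "t \<in> {a..b}" for t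
    proof -
      have "(Ij has_vector_derivative vector_derivative Ij (at t within {a..b})) (at t within {a..b})"
        using dI t unfolding Ij_def by (simp add: vector_derivative_works[symmetric])
      then show ?thesis by (simp add: D_def rl_right_deriv_def Ij_def has_real_derivative_iff_has_vector_derivative)
    qed
    have "((\<lambda>t. psi m a b t * Ij t) has_vector_derivative (dpsi m a b t * Ij t + psi m a b t * (- D t))) (at t within {a..b})"
      if t: "t \<in> {a..b}" for t
      unfolding has_real_derivative_iff_has_vector_derivative[symmetric]
      using DERIV_mult[OF psi_deriv[OF m1] dIj[OF t]] by (simp add: algebra_simps)
    then have "((\<lambda>t. dpsi m a b t * Ij t + psi m a b t * (- D t)) has_integral
        (psi m a b b * Ij b - psi m a b a * Ij a)) {a..b}"
      using ab by (intro fundamental_theorem_of_calculus) auto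
    then have h1: "((\<lambda>t. dpsi m a b t * Ij t + psi m a b t * (- D t)) has_integral 0) {a..b}"
      using psi_ends[of m a b] m1 by simp
    have h2: "((\<lambda>t. psi m a b t * D t) has_integral integral {a..b} (\<lambda>t. psi m a b t * D t)) {a..b}"
      unfolding D_def by (intro integrable_integral integrable_continuous_interval continuous_intros cps cD)
    from has_integral_add[OF h1 h2] show ?thesis by (simp add: integral_unique)
  qed
  finally show ?thesis by (simp add: D_def)
qed

lemma psi_alt: "psi m a b t = (t - a) ^ m * (b - t)"
  by (simp add: psi_def algebra_simps)

lemma fund_lemma:
  fixes F :: "real \<Rightarrow> real"
  assumes ab: "a < b" and cF: "continuous_on {a..b} F"
    and orth: "\<And>m. m \<ge> 2 \<Longrightarrow> integral {a..b} (\<lambda>t. F t * psi m a b t) = 0"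
  shows "\<forall>t\<in>{a..b}. F t = 0"
proof -
  define W where "W = (\<lambda>t. F t * ((t - a) ^ 2 * (b - t)))"
  have cW: "continuous_on {a..b} W" unfolding W_def by (intro continuous_intros cF)
  have mono0: "integral {a..b} (\<lambda>t. W t * (t - a) ^ k) = 0" for k
  proof -
    have "integral {a..b} (\<lambda>t. W t * (t - a) ^ k) = integral {a..b} (\<lambda>t. F t * psi (k + 2) a b t)"
      by (intro integral_cong) (simp add: W_def psi_alt power_add mult_ac power2_eq_square)
    then show ?thesis using orth[of "k+2"] by simp
  qed
  have poly0: "integral {a..b} (\<lambda>t. W t * (\<Sum>i\<le>n. c i * (t - a) ^ i)) = 0" for c n
  proof -
    have "integral {a..b} (\<lambda>t. W t * (\<Sum>i\<le>n. c i * (t - a) ^ i)) = integral {a..b} (\<lambda>t. \<Sum>i\<le>n. c i * (W t * (t - a) ^ i))"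
      by (simp add: sum_distrib_left mult_ac)
    also have "\<dots> = (\<Sum>i\<le>n. integral {a..b} (\<lambda>t. c i * (W t * (t - a) ^ i)))"
      by (intro integral_sum) (auto intro!: integrable_continuous_interval continuous_intros cW)
    also have "\<dots> = 0" using mono0 by simp
    finally show ?thesis .
  qed
  obtain MW where MW: "\<And>t. t \<in> {a..b} \<Longrightarrow> \<bar>W t\<bar> \<le> MW"
    using compact_imp_bounded[OF compact_continuous_image[OF cW compact_Icc]] by (auto simp: bounded_iff) (meson atLeastAtMost_iff)
  have MW0: "MW \<ge> 0" using MW[of a] ab by auto
  have intW2: "(\<lambda>t. W t * W t) integrable_on {a..b}"
    by (intro integrable_continuous_interval continuous_intros cW)
  have le: "integral {a..b} (\<lambda>t. W t * W t) \<le> e * (MW * (b - a))" if e: "e > 0" for e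
  proof -
    define V where "V = (\<lambda>u. W (u + a))"
    have cV: "continuous_on {0..b-a} V" unfolding V_def
      by (rule continuous_on_compose2[OF cW]) (auto intro!: continuous_intros)
    obtain g where g: "real_polynomial_function g" "\<And>u. u \<in> {0..b-a} \<Longrightarrow> \<bar>V u - g u\<bar> < e"
      using Stone_Weierstrass_real_polynomial_function[OF compact_Icc cV e] by blast
    obtain c n where gs: "g = (\<lambda>x. \<Sum>i\<le>n. c i * x ^ i)"
      using g(1) real_polynomial_function_iff_sum by blast
    have cg: "continuous_on {a..b} (\<lambda>t. g (t - a))" unfolding gs by (intro continuous_intros)
    have "integral {a..b} (\<lambda>t. W t * W t) = integral {a..b} (\<lambda>t. W t * (W t - g (t - a))) + integral {a..b} (\<lambda>t. W t * g (t - a))"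
      by (subst integral_add[symmetric]) (auto intro!: integrable_continuous_interval continuous_intros cW cg simp: algebra_simps)
    also have "integral {a..b} (\<lambda>t. W t * g (t - a)) = 0" unfolding gs by (rule poly0)
    also have "integral {a..b} (\<lambda>t. W t * (W t - g (t - a))) \<le> integral {a..b} (\<lambda>t. MW * e)"
    proof (rule integral_le)
      show "(\<lambda>t. W t * (W t - g (t - a))) integrable_on {a..b}"
        by (intro integrable_continuous_interval continuous_intros cW cg)
      fix t assume t: "t \<in> {a..b}"
      have "\<bar>W t - g (t - a)\<bar> < e" using g(2)[of "t - a"] t by (simp add: V_def)
      then have "\<bar>W t * (W t - g (t - a))\<bar> \<le> MW * e"
        unfolding abs_mult using MW[OF t] by (intro mult_mono) auto
      then show "W t * (W t - g (t - a)) \<le> MW * e" by simp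
    qed auto
    also have "integral {a..b} (\<lambda>t. MW * e) = e * (MW * (b - a))" using ab by simp
    finally show ?thesis by simp
  qed
  have "integral {a..b} (\<lambda>t. W t * W t) \<le> 0"
  proof (rule ccontr)
    assume "\<not> ?thesis"
    then have p: "integral {a..b} (\<lambda>t. W t * W t) > 0" by simp
    define e where "e = integral {a..b} (\<lambda>t. W t * W t) / (2 * (MW * (b - a) + 1))"
    have d0: "MW * (b - a) \<ge> 0" using MW0 ab by simp
    then have d: "MW * (b - a) + 1 > 0" by linarith
    have e: "e > 0" using p d by (simp add: e_def)
    have "e * (MW * (b - a)) < e * (MW * (b - a) + 1) * 2" 
    proof -
      have "e * (MW * (b - a) + 1) * 2 - e * (MW * (b - a)) = e * (MW * (b - a) + 2)" by (simp add: algebra_simps)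
      moreover have "e * (MW * (b - a) + 2) > 0" using e d0 by (intro mult_pos_pos) auto
      ultimately show ?thesis by linarith
    qed
    also have "\<dots> = integral {a..b} (\<lambda>t. W t * W t)" using d unfolding e_def by (simp add: field_simps)
    finally show False using le[OF e] by simp
  qed
  moreover have "integral {a..b} (\<lambda>t. W t * W t) \<ge> 0"
    by (intro integral_nonneg intW2) auto
  ultimately have I0: "((\<lambda>t. W t * W t) has_integral 0) (cbox a b)"
    using intW2 by (metis antisym cbox_interval has_integral_integral)
  have cWW: "continuous_on {a..b} (\<lambda>x. W x * W x)" by (intro continuous_intros cW)
  have W0: "W t = 0" if "t \<in> {a..b}" for t
    using has_integral_0_cbox_imp_0[OF _ _ I0, of t] ab that cWW
    by auto
  have F0: "F t = 0" if "t \<in> {a<..<b}" for t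
    using W0[of t] that by (auto simp: W_def)
  have cl: "closed {t \<in> {a..b}. F t = 0}"
    by (rule continuous_closed_preimage_constant[OF cF]) auto
  have "{a<..<b} \<subseteq> {t \<in> {a..b}. F t = 0}" using F0 by auto
  then have "closure {a<..<b} \<subseteq> {t \<in> {a..b}. F t = 0}"
    using cl by (rule closure_minimal)
  then show ?thesis using ab by auto
qed

lemma L_mv:
  fixes L Lt Lz :: "real \<times> (real^'n) \<times> (real^'n) \<times> real \<Rightarrow> real"
    and Lx Lv :: "real \<times> (real^'n) \<times> (real^'n) \<times> real \<Rightarrow> real^'n"
  assumes L_deriv: "\<forall>p \<in> {a..b} \<times> (UNIV :: ((real^'n) \<times> (real^'n) \<times> real) set).
        (L has_derivative (\<lambda>(dt, dx, dv, dz). Lt p * dt + Lx p \<bullet> dx + Lv p \<bullet> dv + Lz p * dz))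
          (at p within {a..b} \<times> UNIV)"
    and t: "t \<in> {a..b}"
  shows "\<exists>\<theta>\<in>{0..1}. L (t, X + hx, V + hv, Z + hz) - L (t, X, V, Z) =
     Lx (t, X + \<theta> *\<^sub>R hx, V + \<theta> *\<^sub>R hv, Z + \<theta> * hz) \<bullet> hx
   + Lv (t, X + \<theta> *\<^sub>R hx, V + \<theta> *\<^sub>R hv, Z + \<theta> * hz) \<bullet> hv
   + Lz (t, X + \<theta> *\<^sub>R hx, V + \<theta> *\<^sub>R hv, Z + \<theta> * hz) * hz"
proof -
  define \<gamma> where "\<gamma> = (\<lambda>s::real. (t, X + s *\<^sub>R hx, V + s *\<^sub>R hv, Z + s * hz))"
  define DL where "DL = (\<lambda>p. (\<lambda>(dt::real, dx::real^'n, dv::real^'n, dz::real). Lt p * dt + Lx p \<bullet> dx + Lv p \<bullet> dv + Lz p * dz))"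
  have dg: "(\<gamma> has_derivative (\<lambda>ds. (0, ds *\<^sub>R hx, ds *\<^sub>R hv, ds * hz))) (at s within {0..1})" for s
    unfolding \<gamma>_def by (auto intro!: derivative_eq_intros)
  have img: "\<gamma> ` {0..1} \<subseteq> {a..b} \<times> UNIV" using t by (auto simp: \<gamma>_def)
  have dLg: "((\<lambda>s. L (\<gamma> s)) has_derivative (\<lambda>ds. DL (\<gamma> s) (0, ds *\<^sub>R hx, ds *\<^sub>R hv, ds * hz))) (at s within {0..1})"
    if "s \<in> {0..1}" for s
    by (rule has_derivative_in_compose2[OF _ img that dg]) (use L_deriv in \<open>auto simp: DL_def\<close>)
  obtain \<theta> where th: "\<theta> \<in> {0..1}" and eq: "L (\<gamma> 1) - L (\<gamma> 0) = DL (\<gamma> \<theta>) (0, (1 - 0) *\<^sub>R hx, (1 - 0) *\<^sub>R hv, (1 - 0) * hz)"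
    using mvt_very_simple[of 0 1 "\<lambda>s. L (\<gamma> s)" "\<lambda>s ds. DL (\<gamma> s) (0, ds *\<^sub>R hx, ds *\<^sub>R hv, ds * hz)"] dLg
    by auto
  show ?thesis
    using th eq by (intro bexI[of _ \<theta>]) (auto simp: \<gamma>_def DL_def)
qed

lemma gronwall_cont:
  fixes w w' :: "real \<Rightarrow> real"
  assumes ab: "a \<le> b" and w0: "w a = 0"
    and wd: "\<And>t. t \<in> {a..b} \<Longrightarrow> (w has_real_derivative w' t) (at t within {a..b})"
    and bnd: "\<And>t. t \<in> {a..b} \<Longrightarrow> \<bar>w t\<bar> \<le> 1 \<Longrightarrow> \<bar>w' t\<bar> \<le> M * (c + \<bar>w t\<bar>)"
    and M: "M \<ge> 0" and c: "c \<ge> 0" and small: "c^2 * exp (3*M*(b-a)) < 1"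
  shows "\<forall>t\<in>{a..b}. (w t)^2 \<le> c^2 * exp (3*M*(b-a))"
proof -
  define B where "B = c^2 * exp (3*M*(b-a))"
  have cw: "continuous_on {a..b} w" using wd by (rule DERIV_continuous_on)
  have key: "(w t)^2 \<le> B" if t: "t \<in> {a..b}" and sm: "\<forall>s\<in>{a..t}. \<bar>w s\<bar> \<le> 1" for t
  proof -
    define v where "v = (\<lambda>s. ((w s)^2 + c^2) * exp (-(3*M)*(s-a)))"
    define v' where "v' = (\<lambda>s. (2 * w s * w' s) * exp (-(3*M)*(s-a)) + ((w s)^2 + c^2) * (exp (-(3*M)*(s-a)) * (-(3*M))))"
    have vd: "(v has_real_derivative v' s) (at s within {a..t})" if s: "s \<in> {a..t}" for s
    proof -
      have "(w has_real_derivative w' s) (at s within {a..t})"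
        using wd[of s] s t by (auto intro: DERIV_subset)
      then show ?thesis unfolding v_def v'_def
        by (auto intro!: derivative_eq_intros simp: power2_eq_square)
    qed
    have vn: "v' s \<le> 0" if s: "s \<in> {a..t}" for s
    proof -
      have sab: "s \<in> {a..b}" using s t by auto
      have w1: "\<bar>w s\<bar> \<le> 1" using sm s by auto
      have "2 * w s * w' s \<le> 2 * \<bar>w s\<bar> * \<bar>w' s\<bar>" by (simp add: abs_mult[symmetric])
      also have "\<dots> \<le> 2 * \<bar>w s\<bar> * (M * (c + \<bar>w s\<bar>))"
        using bnd[OF sab w1] by (intro mult_left_mono) auto
      also have "\<dots> = M * (2 * c * \<bar>w s\<bar>) + 2 * M * (w s)^2" by (simp add: algebra_simps power2_eq_square)
      also have "\<dots> \<le> M * (c^2 + (w s)^2) + 2 * M * (w s)^2"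
      proof -
        have "2 * c * \<bar>w s\<bar> \<le> c^2 + (w s)^2"
          using sum_squares_bound[of c "\<bar>w s\<bar>"] by (simp add: power2_eq_square)
        then show ?thesis using M by (intro add_right_mono mult_left_mono) auto
      qed
      also have "\<dots> \<le> 3 * M * ((w s)^2 + c^2)" using M by (simp add: algebra_simps)
      finally have "2 * w s * w' s - 3 * M * ((w s)^2 + c^2) \<le> 0" by simp
      then have "(2 * w s * w' s - 3 * M * ((w s)^2 + c^2)) * exp (-(3*M)*(s-a)) \<le> 0"
        by (simp add: mult_nonpos_nonneg)
      then show ?thesis by (simp add: v'_def algebra_simps)
    qed
    have at: "a \<le> t" using t by auto
    obtain \<xi> where xi: "\<xi> \<in> {a..t}" and eq: "v t - v a = v' \<xi> * (t - a)"
      using mvt_very_simple[OF at, of v "\<lambda>s d. v' s * d"] vd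
      by (auto simp: has_field_derivative_def mult_commute_abs)
    have "v t \<le> v a" using eq vn[OF xi] at by (smt (verit) mult_nonpos_nonneg)
    then have "((w t)^2 + c^2) * exp (-(3*M)*(t-a)) \<le> c^2" by (simp add: v_def w0)
    then have "((w t)^2 + c^2) * exp (-(3*M)*(t-a)) * exp (3*M*(t-a)) \<le> c^2 * exp (3*M*(t-a))"
      by (intro mult_right_mono) auto
    then have "(w t)^2 + c^2 \<le> c^2 * exp (3*M*(t-a))"
      by (simp add: mult.assoc exp_add[symmetric])
    also have "\<dots> \<le> c^2 * exp (3*M*(b-a))"
      using t M by (intro mult_left_mono) (auto intro!: mult_left_mono)
    finally show ?thesis unfolding B_def by (smt (verit) zero_le_power2)
  qed
  have all1: "\<forall>t\<in>{a..b}. \<bar>w t\<bar> < 1"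
  proof (rule ccontr)
    assume nt: "\<not> ?thesis"
    define S where "S = {a..b} \<inter> (\<lambda>t. \<bar>w t\<bar>) -` {1..}"
    have Sne: "S \<noteq> {}" using nt by (auto simp: S_def)
    have Scl: "closed S" unfolding S_def
      by (rule continuous_closed_preimage) (auto intro!: continuous_intros cw)
    have bb: "bdd_below S" by (auto simp: S_def bdd_below_def)
    define ts where "ts = Inf S"
    have tsS: "ts \<in> S" unfolding ts_def by (rule closed_contains_Inf[OF Sne bb Scl])
    have lt: "\<bar>w s\<bar> < 1" if "s \<in> {a..b}" "s < ts" for s
    proof (rule ccontr)
      assume "\<not> \<bar>w s\<bar> < 1"
      then have "s \<in> S" using that by (auto simp: S_def)
      then have "ts \<le> s" unfolding ts_def by (rule cInf_lower[OF _ bb])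
      then show False using that by simp
    qed
    have tsab: "ts \<in> {a..b}" and w1: "\<bar>w ts\<bar> \<ge> 1" using tsS by (auto simp: S_def)
    have ats: "a < ts" using tsab w1 w0 by (cases "ts = a") auto
    have "{a..<ts} \<subseteq> {t \<in> {a..b}. (w t)^2 \<le> B}"
    proof
      fix t assume t: "t \<in> {a..<ts}"
      then have tab: "t \<in> {a..b}" using tsab by auto
      have "\<forall>s\<in>{a..t}. \<bar>w s\<bar> \<le> 1" using lt t tsab by fastforce
      then show "t \<in> {t \<in> {a..b}. (w t)^2 \<le> B}" using key[OF tab] tab by auto
    qed
    moreover have "closed {t \<in> {a..b}. (w t)^2 \<le> B}"
    proof -
      have "{t \<in> {a..b}. (w t)^2 \<le> B} = {a..b} \<inter> (\<lambda>t. (w t)^2) -` {..B}" by auto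
      also have "closed \<dots>" by (rule continuous_closed_preimage) (auto intro!: continuous_intros cw)
      finally show ?thesis .
    qed
    ultimately have "closure {a..<ts} \<subseteq> {t \<in> {a..b}. (w t)^2 \<le> B}" by (rule closure_minimal)
    then have "(w ts)^2 \<le> B" using ats by (auto dest!: subsetD[of _ _ ts])
    then have "(w ts)^2 < 1" using small B_def by simp
    moreover have "1 \<le> (w ts)^2" using w1
      by (metis abs_le_square_iff abs_one one_power2)
    ultimately show False by simp
  qed
  show ?thesis using key all1 unfolding B_def by (meson atLeastAtMost_iff less_imp_le order_trans)
qed

lemma cont_fst_comp:
  assumes "continuous_on S f"
  shows "continuous_on (S \<times> T) (\<lambda>q. f (fst q))"
  by (rule continuous_on_compose2[OF assms continuous_on_fst]) auto

lemma remainder_bound: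
  fixes L Lt Lz :: "real \<times> (real^'n) \<times> (real^'n) \<times> real \<Rightarrow> real"
    and Lx Lv :: "real \<times> (real^'n) \<times> (real^'n) \<times> real \<Rightarrow> real^'n"
    and X V E F :: "real \<Rightarrow> real^'n" and z :: "real \<Rightarrow> real \<Rightarrow> real"
  assumes ab: "a < b"
    and L_deriv: "\<forall>p \<in> {a..b} \<times> (UNIV :: ((real^'n) \<times> (real^'n) \<times> real) set).
        (L has_derivative (\<lambda>(dt, dx, dv, dz). Lt p * dt + Lx p \<bullet> dx + Lv p \<bullet> dv + Lz p * dz))
          (at p within {a..b} \<times> UNIV)"
    and cLx: "continuous_on ({a..b} \<times> UNIV) Lx" and cLv: "continuous_on ({a..b} \<times> UNIV) Lv"
    and cLz: "continuous_on ({a..b} \<times> UNIV) Lz"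
    and cX: "continuous_on {a..b} X" and cV: "continuous_on {a..b} V"
    and cE: "continuous_on {a..b} E" and cF: "continuous_on {a..b} F"
    and zd: "\<And>\<epsilon> t. t \<in> {a..b} \<Longrightarrow>
        (z \<epsilon> has_real_derivative L (t, X t + \<epsilon> *\<^sub>R E t, V t + \<epsilon> *\<^sub>R F t, z \<epsilon> t)) (at t within {a..b})"
    and za: "\<And>\<epsilon>. z \<epsilon> a = z 0 a"
  shows "\<forall>e>0. \<exists>\<delta>>0. \<forall>\<epsilon>. \<bar>\<epsilon>\<bar> < \<delta> \<longrightarrow> (\<forall>t\<in>{a..b}.
     \<bar>L (t, X t + \<epsilon> *\<^sub>R E t, V t + \<epsilon> *\<^sub>R F t, z \<epsilon> t) - L (t, X t, V t, z 0 t)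
      - \<epsilon> * (Lx (t, X t, V t, z 0 t) \<bullet> E t + Lv (t, X t, V t, z 0 t) \<bullet> F t)
      - Lz (t, X t, V t, z 0 t) * (z \<epsilon> t - z 0 t)\<bar> \<le> e * \<bar>\<epsilon>\<bar>)"
proof -
  have cz: "continuous_on {a..b} (z \<epsilon>)" for \<epsilon>
    using zd by (rule DERIV_continuous_on)
  define D where "D = {a..b} \<times> {-1..1::real} \<times> {-1..1::real}"
  define \<kappa> where "\<kappa> = (\<lambda>q::real \<times> real \<times> real. (fst q, X (fst q) + fst (snd q) *\<^sub>R E (fst q),
      V (fst q) + fst (snd q) *\<^sub>R F (fst q), z 0 (fst q) + snd (snd q)))"
  define K where "K = \<kappa> ` D"
  have cX': "continuous_on D (\<lambda>q. X (fst q))" "continuous_on D (\<lambda>q. V (fst q))"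
     "continuous_on D (\<lambda>q. E (fst q))" "continuous_on D (\<lambda>q. F (fst q))"
     "continuous_on D (\<lambda>q. z 0 (fst q))"
    unfolding D_def by (intro cont_fst_comp cX cV cE cF cz)+
  have ck: "continuous_on D \<kappa>" unfolding \<kappa>_def
    by (intro continuous_intros cX')
  have cD: "compact D" unfolding D_def by (intro compact_Times compact_Icc)
  have cK: "compact K" unfolding K_def by (rule compact_continuous_image[OF ck cD])
  have KS: "K \<subseteq> {a..b} \<times> UNIV" by (auto simp: K_def D_def \<kappa>_def)
  have memK: "(t, X t + s *\<^sub>R E t, V t + s *\<^sub>R F t, z 0 t + r) \<in> K"
    if "t \<in> {a..b}" "\<bar>s\<bar> \<le> 1" "\<bar>r\<bar> \<le> 1" for t s r
  proof -
    have "(t, s, r) \<in> D" using that by (auto simp: D_def)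
    then show ?thesis unfolding K_def \<kappa>_def by (auto intro: image_eqI[of _ _ "(t, s, r)"])
  qed
  define DL where "DL = (\<lambda>q. (Lx q, Lv q, Lz q))"
  have cDL: "continuous_on K DL" unfolding DL_def
    using continuous_on_subset[OF cLx KS] continuous_on_subset[OF cLv KS] continuous_on_subset[OF cLz KS]
    by (intro continuous_intros)
  have uDL: "uniformly_continuous_on K DL" by (rule compact_uniformly_continuous[OF cDL cK])
  obtain M0 where M0: "\<And>q. q \<in> K \<Longrightarrow> norm (DL q) \<le> M0"
    using compact_imp_bounded[OF compact_continuous_image[OF cDL cK]] by (auto simp: bounded_iff)
  define M where "M = max M0 0"
  have M: "M \<ge> 0" by (simp add: M_def)
  have MK: "norm (Lx q) \<le> M" "norm (Lv q) \<le> M" "\<bar>Lz q\<bar> \<le> M" if "q \<in> K" for q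
  proof -
    have n: "norm (DL q) \<le> M" using M0[OF that] by (simp add: M_def)
    have "norm (Lx q) \<le> norm (DL q)" unfolding DL_def by (rule norm_fst_le)
    then show "norm (Lx q) \<le> M" using n by simp
    have "norm (Lv q) \<le> norm (Lv q, Lz q)" by (rule norm_fst_le)
    also have "\<dots> \<le> norm (DL q)" unfolding DL_def by (rule norm_snd_le)
    finally show "norm (Lv q) \<le> M" using n by simp
    have "norm (Lz q) \<le> norm (Lv q, Lz q)" by (rule norm_snd_le)
    also have "\<dots> \<le> norm (DL q)" unfolding DL_def by (rule norm_snd_le)
    finally show "\<bar>Lz q\<bar> \<le> M" using n by simp
  qed
  obtain NE0 where NE0: "\<And>t. t \<in> {a..b} \<Longrightarrow> norm (E t) \<le> NE0"
    using compact_imp_bounded[OF compact_continuous_image[OF cE compact_Icc]] by (auto simp: bounded_iff) (meson atLeastAtMost_iff)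
  obtain NF0 where NF0: "\<And>t. t \<in> {a..b} \<Longrightarrow> norm (F t) \<le> NF0"
    using compact_imp_bounded[OF compact_continuous_image[OF cF compact_Icc]] by (auto simp: bounded_iff) (meson atLeastAtMost_iff)
  define NE where "NE = max NE0 0"
  define NF where "NF = max NF0 0"
  have NE: "NE \<ge> 0" "\<And>t. t \<in> {a..b} \<Longrightarrow> norm (E t) \<le> NE" using NE0 by (auto simp: NE_def intro: le_max_iff_disj[THEN iffD2])
  have NF: "NF \<ge> 0" "\<And>t. t \<in> {a..b} \<Longrightarrow> norm (F t) \<le> NF" using NF0 by (auto simp: NF_def intro: le_max_iff_disj[THEN iffD2])
  define G where "G = exp (3 * M * (b - a))"
  define P where "P = (NE + NF + 1) * sqrt G"
  have G1: "G \<ge> 1" using M ab by (simp add: G_def)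
  have P1: "P \<ge> 1"
  proof -
    have "1 \<le> NE + NF + 1" "1 \<le> sqrt G" using NE(1) NF(1) G1 by auto
    then have "1 * 1 \<le> (NE + NF + 1) * sqrt G" by (intro mult_mono) auto
    then show ?thesis by (simp add: P_def)
  qed
  have wbound: "\<forall>t\<in>{a..b}. \<bar>z \<epsilon> t - z 0 t\<bar> \<le> P * \<bar>\<epsilon>\<bar> \<and> \<bar>z \<epsilon> t - z 0 t\<bar> \<le> 1"
    if eps: "\<bar>\<epsilon>\<bar> * P < 1" for \<epsilon>
  proof -
    have "\<bar>\<epsilon>\<bar> * 1 \<le> \<bar>\<epsilon>\<bar> * P" using P1 by (intro mult_left_mono) auto
    then have e1: "\<bar>\<epsilon>\<bar> \<le> 1" using eps by linarith
    define c where "c = \<bar>\<epsilon>\<bar> * (NE + NF)"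
    have c0: "c \<ge> 0" using NE NF by (simp add: c_def)
    define w where "w = (\<lambda>t. z \<epsilon> t - z 0 t)"
    define w' where "w' = (\<lambda>t. L (t, X t + \<epsilon> *\<^sub>R E t, V t + \<epsilon> *\<^sub>R F t, z \<epsilon> t) - L (t, X t, V t, z 0 t))"
    have wd: "(w has_real_derivative w' t) (at t within {a..b})" if "t \<in> {a..b}" for t
      using DERIV_diff[OF zd[OF that, of \<epsilon>] zd[OF that, of 0]] by (simp add: w_def w'_def)
    have csq: "c * sqrt G \<le> \<bar>\<epsilon>\<bar> * P"
    proof -
      have "c * sqrt G = \<bar>\<epsilon>\<bar> * ((NE + NF) * sqrt G)" by (simp add: c_def)
      also have "\<dots> \<le> \<bar>\<epsilon>\<bar> * P" unfolding P_def
        by (intro mult_left_mono mult_right_mono) (use G1 in auto)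
      finally show ?thesis .
    qed
    have sm: "c^2 * G < 1"
    proof -
      have "c^2 * G = (c * sqrt G)^2" using G1 by (simp add: power_mult_distrib)
      also have "\<dots> < 1"
      proof -
        have "0 \<le> c * sqrt G" using c0 G1 by simp
        moreover have "c * sqrt G < 1" using csq eps by linarith
        ultimately show ?thesis by (simp add: power_less_one_iff)
      qed
      finally show ?thesis .
    qed
    have bnd: "\<bar>w' t\<bar> \<le> M * (c + \<bar>w t\<bar>)" if t: "t \<in> {a..b}" and w1: "\<bar>w t\<bar> \<le> 1" for t
    proof -
      obtain \<theta> where th: "\<theta> \<in> {0..1}" and eq: "L (t, X t + \<epsilon> *\<^sub>R E t, V t + \<epsilon> *\<^sub>R F t, z 0 t + w t) - L (t, X t, V t, z 0 t) =
         Lx (t, X t + \<theta> *\<^sub>R (\<epsilon> *\<^sub>R E t), V t + \<theta> *\<^sub>R (\<epsilon> *\<^sub>R F t), z 0 t + \<theta> * w t) \<bullet> (\<epsilon> *\<^sub>R E t)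
       + Lv (t, X t + \<theta> *\<^sub>R (\<epsilon> *\<^sub>R E t), V t + \<theta> *\<^sub>R (\<epsilon> *\<^sub>R F t), z 0 t + \<theta> * w t) \<bullet> (\<epsilon> *\<^sub>R F t)
       + Lz (t, X t + \<theta> *\<^sub>R (\<epsilon> *\<^sub>R E t), V t + \<theta> *\<^sub>R (\<epsilon> *\<^sub>R F t), z 0 t + \<theta> * w t) * w t"
        using L_mv[OF L_deriv t] by blast
      define q where "q = (t, X t + \<theta> *\<^sub>R (\<epsilon> *\<^sub>R E t), V t + \<theta> *\<^sub>R (\<epsilon> *\<^sub>R F t), z 0 t + \<theta> * w t)"
      have qK: "q \<in> K"
      proof -
        have "\<bar>\<theta> * \<epsilon>\<bar> \<le> 1" using th e1 by (auto simp: abs_mult intro: mult_le_one)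
        moreover have "\<bar>\<theta> * w t\<bar> \<le> 1" using th w1 by (auto simp: abs_mult intro: mult_le_one)
        ultimately show ?thesis using memK[OF t, of "\<theta> * \<epsilon>" "\<theta> * w t"] by (simp add: q_def)
      qed
      have "w' t = Lx q \<bullet> (\<epsilon> *\<^sub>R E t) + Lv q \<bullet> (\<epsilon> *\<^sub>R F t) + Lz q * w t"
        using eq by (simp add: w'_def w_def q_def)
      also have "\<bar>\<dots>\<bar> \<le> norm (Lx q) * norm (\<epsilon> *\<^sub>R E t) + norm (Lv q) * norm (\<epsilon> *\<^sub>R F t) + \<bar>Lz q\<bar> * \<bar>w t\<bar>"
        by (intro order.trans[OF abs_triangle_ineq] add_mono order.trans[OF abs_triangle_ineq] Cauchy_Schwarz_ineq2)
           (auto simp: abs_mult)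
      also have "\<dots> \<le> M * (\<bar>\<epsilon>\<bar> * NE) + M * (\<bar>\<epsilon>\<bar> * NF) + M * \<bar>w t\<bar>"
        using MK[OF qK] NE(2)[OF t] NF(2)[OF t]
        by (intro add_mono mult_mono) (auto intro: mult_left_mono)
      also have "\<dots> = M * (c + \<bar>w t\<bar>)" by (simp add: c_def algebra_simps)
      finally show ?thesis .
    qed
    have gr: "\<forall>t\<in>{a..b}. (w t)^2 \<le> c^2 * exp (3*M*(b-a))"
    proof -
      have w0: "w a = 0" using za[of \<epsilon>] by (simp add: w_def)
      have sm': "c^2 * exp (3*M*(b-a)) < 1" using sm by (simp add: G_def)
      show ?thesis using gronwall_cont[of a b w w' M c, OF _ w0 wd bnd M c0 sm'] ab by simp
    qed
    show ?thesis
    proof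
      fix t assume t: "t \<in> {a..b}"
      have "(w t)^2 \<le> (c * sqrt G)^2" using gr t G1 by (simp add: G_def power_mult_distrib)
      then have "\<bar>w t\<bar> \<le> c * sqrt G" using c0 G1 by (intro power2_le_imp_le[of "\<bar>w t\<bar>"]) auto
      then have "\<bar>w t\<bar> \<le> P * \<bar>\<epsilon>\<bar>" using csq by (simp add: mult.commute)
      moreover have "P * \<bar>\<epsilon>\<bar> \<le> 1" using eps by (simp add: mult.commute)
      ultimately show "\<bar>z \<epsilon> t - z 0 t\<bar> \<le> P * \<bar>\<epsilon>\<bar> \<and> \<bar>z \<epsilon> t - z 0 t\<bar> \<le> 1" by (simp add: w_def)
    qed
  qed
  show ?thesis
  proof (intro allI impI)
    fix e :: real assume e: "e > 0"
    define S where "S = NE + NF + P"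
    have S: "S > 0" using NE NF P1 by (simp add: S_def)
    obtain d where d: "d > 0" and dd: "\<And>q q'. q \<in> K \<Longrightarrow> q' \<in> K \<Longrightarrow> dist q' q < d \<Longrightarrow> dist (DL q') (DL q) < e / S"
      using uDL[unfolded uniformly_continuous_on_def, rule_format, of "e / S"] e S by auto
    define \<delta> where "\<delta> = min (1 / (P + 1)) (d / (S + 1))"
    have \<delta>: "\<delta> > 0" using P1 d S by (simp add: \<delta>_def)
    show "\<exists>\<delta>>0. \<forall>\<epsilon>. \<bar>\<epsilon>\<bar> < \<delta> \<longrightarrow> (\<forall>t\<in>{a..b}.
     \<bar>L (t, X t + \<epsilon> *\<^sub>R E t, V t + \<epsilon> *\<^sub>R F t, z \<epsilon> t) - L (t, X t, V t, z 0 t)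
      - \<epsilon> * (Lx (t, X t, V t, z 0 t) \<bullet> E t + Lv (t, X t, V t, z 0 t) \<bullet> F t)
      - Lz (t, X t, V t, z 0 t) * (z \<epsilon> t - z 0 t)\<bar> \<le> e * \<bar>\<epsilon>\<bar>)"
    proof (intro exI[of _ \<delta>] conjI allI impI ballI \<delta>)
      fix \<epsilon> t assume eps: "\<bar>\<epsilon>\<bar> < \<delta>" and t: "t \<in> {a..b}"
      have epsP: "\<bar>\<epsilon>\<bar> * P < 1"
      proof -
        have "\<bar>\<epsilon>\<bar> * P \<le> \<bar>\<epsilon>\<bar> * (P + 1)" by (simp add: mult_left_mono)
        also have "\<dots> < 1 / (P + 1) * (P + 1)" using eps P1 by (intro mult_strict_right_mono) (auto simp: \<delta>_def)
        finally show ?thesis using P1 by simp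
      qed
      have epsd: "\<bar>\<epsilon>\<bar> * S < d"
      proof -
        have "\<bar>\<epsilon>\<bar> * S \<le> \<bar>\<epsilon>\<bar> * (S + 1)" by (simp add: mult_left_mono)
        also have "\<dots> < d / (S + 1) * (S + 1)" using eps S by (intro mult_strict_right_mono) (auto simp: \<delta>_def)
        finally show ?thesis using S by simp
      qed
      have "\<bar>\<epsilon>\<bar> * 1 \<le> \<bar>\<epsilon>\<bar> * P" using P1 by (intro mult_left_mono) auto
      then have e1: "\<bar>\<epsilon>\<bar> \<le> 1" using epsP by linarith
      define w where "w = z \<epsilon> t - z 0 t"
      have wb: "\<bar>w\<bar> \<le> P * \<bar>\<epsilon>\<bar>" "\<bar>w\<bar> \<le> 1" using wbound[OF epsP] t by (auto simp: w_def)
      obtain \<theta> where th: "\<theta> \<in> {0..1}" and eq: "L (t, X t + \<epsilon> *\<^sub>R E t, V t + \<epsilon> *\<^sub>R F t, z 0 t + w) - L (t, X t, V t, z 0 t) =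
         Lx (t, X t + \<theta> *\<^sub>R (\<epsilon> *\<^sub>R E t), V t + \<theta> *\<^sub>R (\<epsilon> *\<^sub>R F t), z 0 t + \<theta> * w) \<bullet> (\<epsilon> *\<^sub>R E t)
       + Lv (t, X t + \<theta> *\<^sub>R (\<epsilon> *\<^sub>R E t), V t + \<theta> *\<^sub>R (\<epsilon> *\<^sub>R F t), z 0 t + \<theta> * w) \<bullet> (\<epsilon> *\<^sub>R F t)
       + Lz (t, X t + \<theta> *\<^sub>R (\<epsilon> *\<^sub>R E t), V t + \<theta> *\<^sub>R (\<epsilon> *\<^sub>R F t), z 0 t + \<theta> * w) * w"
        using L_mv[OF L_deriv t] by blast
      define q where "q = (t, X t + \<theta> *\<^sub>R (\<epsilon> *\<^sub>R E t), V t + \<theta> *\<^sub>R (\<epsilon> *\<^sub>R F t), z 0 t + \<theta> * w)"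
      define p where "p = (t, X t, V t, z 0 t)"
      have qK: "q \<in> K"
      proof -
        have "\<bar>\<theta> * \<epsilon>\<bar> \<le> 1" using th e1 by (auto simp: abs_mult intro: mult_le_one)
        moreover have "\<bar>\<theta> * w\<bar> \<le> 1" using th wb by (auto simp: abs_mult intro: mult_le_one)
        ultimately show ?thesis using memK[OF t, of "\<theta> * \<epsilon>" "\<theta> * w"] by (simp add: q_def)
      qed
      have pK: "p \<in> K" using memK[OF t, of 0 0] by (simp add: p_def)
      have dqp: "dist q p < d"
      proof -
        have "dist q p = norm (0::real, \<theta> *\<^sub>R (\<epsilon> *\<^sub>R E t), \<theta> *\<^sub>R (\<epsilon> *\<^sub>R F t), \<theta> * w)"
          by (simp add: dist_norm q_def p_def)
        also have "\<dots> \<le> norm (0::real) + (norm (\<theta> *\<^sub>R (\<epsilon> *\<^sub>R E t)) + (norm (\<theta> *\<^sub>R (\<epsilon> *\<^sub>R F t)) + norm (\<theta> * w)))"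
          by (intro order.trans[OF norm_Pair_le] add_mono order_refl)+
        also have "\<dots> \<le> 0 + (\<bar>\<epsilon>\<bar> * NE + (\<bar>\<epsilon>\<bar> * NF + P * \<bar>\<epsilon>\<bar>))"
        proof -
          have th1: "\<bar>\<theta>\<bar> \<le> 1" using th by auto
          have "norm (\<theta> *\<^sub>R (\<epsilon> *\<^sub>R E t)) = \<bar>\<theta>\<bar> * (\<bar>\<epsilon>\<bar> * norm (E t))" by (simp add: abs_mult)
          also have "\<dots> \<le> 1 * (\<bar>\<epsilon>\<bar> * NE)" using th1 NE(2)[OF t] by (intro mult_mono mult_left_mono) auto
          finally have n1: "norm (\<theta> *\<^sub>R (\<epsilon> *\<^sub>R E t)) \<le> \<bar>\<epsilon>\<bar> * NE" by simp
          have "norm (\<theta> *\<^sub>R (\<epsilon> *\<^sub>R F t)) = \<bar>\<theta>\<bar> * (\<bar>\<epsilon>\<bar> * norm (F t))" by (simp add: abs_mult)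
          also have "\<dots> \<le> 1 * (\<bar>\<epsilon>\<bar> * NF)" using th1 NF(2)[OF t] by (intro mult_mono mult_left_mono) auto
          finally have n2: "norm (\<theta> *\<^sub>R (\<epsilon> *\<^sub>R F t)) \<le> \<bar>\<epsilon>\<bar> * NF" by simp
          have "norm (\<theta> * w) = \<bar>\<theta>\<bar> * \<bar>w\<bar>" by (simp add: abs_mult)
          also have "\<dots> \<le> 1 * (P * \<bar>\<epsilon>\<bar>)" using th1 wb by (intro mult_mono) auto
          finally have n3: "norm (\<theta> * w) \<le> P * \<bar>\<epsilon>\<bar>" by simp
          show ?thesis using n1 n2 n3 by simp
        qed
        also have "\<dots> = \<bar>\<epsilon>\<bar> * S" by (simp add: S_def algebra_simps)
        finally show ?thesis using epsd by simp
      qed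
      have dDL: "dist (DL q) (DL p) < e / S" by (rule dd[OF pK qK dqp])
      have c1: "norm (Lx q - Lx p) \<le> e / S" "norm (Lv q - Lv p) \<le> e / S" "\<bar>Lz q - Lz p\<bar> \<le> e / S"
      proof -
        have n: "norm (DL q - DL p) < e / S" using dDL by (simp add: dist_norm)
        have "norm (Lx q - Lx p) \<le> norm (DL q - DL p)" unfolding DL_def using norm_fst_le[of "Lx q - Lx p" "(Lv q - Lv p, Lz q - Lz p)"] by simp
        then show "norm (Lx q - Lx p) \<le> e / S" using n by simp
        have "norm (Lv q - Lv p) \<le> norm (Lv q - Lv p, Lz q - Lz p)" by (rule norm_fst_le)
        also have "\<dots> \<le> norm (DL q - DL p)" unfolding DL_def using norm_snd_le[of "(Lv q - Lv p, Lz q - Lz p)" "Lx q - Lx p"] by simp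
        finally show "norm (Lv q - Lv p) \<le> e / S" using n by simp
        have "norm (Lz q - Lz p) \<le> norm (Lv q - Lv p, Lz q - Lz p)" by (rule norm_snd_le)
        also have "\<dots> \<le> norm (DL q - DL p)" unfolding DL_def using norm_snd_le[of "(Lv q - Lv p, Lz q - Lz p)" "Lx q - Lx p"] by simp
        finally show "\<bar>Lz q - Lz p\<bar> \<le> e / S" using n by simp
      qed
      have zeq: "z \<epsilon> t = z 0 t + w" by (simp add: w_def)
      have "L (t, X t + \<epsilon> *\<^sub>R E t, V t + \<epsilon> *\<^sub>R F t, z \<epsilon> t) - L (t, X t, V t, z 0 t)
      - \<epsilon> * (Lx (t, X t, V t, z 0 t) \<bullet> E t + Lv (t, X t, V t, z 0 t) \<bullet> F t)
      - Lz (t, X t, V t, z 0 t) * (z \<epsilon> t - z 0 t)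
        = (Lx q - Lx p) \<bullet> (\<epsilon> *\<^sub>R E t) + (Lv q - Lv p) \<bullet> (\<epsilon> *\<^sub>R F t) + (Lz q - Lz p) * w"
        using eq unfolding zeq by (simp add: q_def p_def inner_diff_left algebra_simps)
      also have "\<bar>\<dots>\<bar> \<le> norm (Lx q - Lx p) * norm (\<epsilon> *\<^sub>R E t) + norm (Lv q - Lv p) * norm (\<epsilon> *\<^sub>R F t) + \<bar>Lz q - Lz p\<bar> * \<bar>w\<bar>"
        by (intro order.trans[OF abs_triangle_ineq] add_mono order.trans[OF abs_triangle_ineq] Cauchy_Schwarz_ineq2)
           (auto simp: abs_mult)
      also have "\<dots> \<le> (e / S) * (\<bar>\<epsilon>\<bar> * NE) + (e / S) * (\<bar>\<epsilon>\<bar> * NF) + (e / S) * (P * \<bar>\<epsilon>\<bar>)"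
        using c1 NE(2)[OF t] NF(2)[OF t] wb
        by (intro add_mono mult_mono) (auto intro: mult_left_mono)
      also have "\<dots> = (e / S) * (\<bar>\<epsilon>\<bar> * S)" unfolding S_def by (simp add: algebra_simps)
      also have "\<dots> = e * \<bar>\<epsilon>\<bar>" using S by simp
      finally show "\<bar>L (t, X t + \<epsilon> *\<^sub>R E t, V t + \<epsilon> *\<^sub>R F t, z \<epsilon> t) - L (t, X t, V t, z 0 t)
      - \<epsilon> * (Lx (t, X t, V t, z 0 t) \<bullet> E t + Lv (t, X t, V t, z 0 t) \<bullet> F t)
      - Lz (t, X t, V t, z 0 t) * (z \<epsilon> t - z 0 t)\<bar> \<le> e * \<bar>\<epsilon>\<bar>" .
    qed
  qed
qed

lemma variational:
  fixes L Lt Lz :: "real \<times> (real^'n) \<times> (real^'n) \<times> real \<Rightarrow> real"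
    and Lx Lv :: "real \<times> (real^'n) \<times> (real^'n) \<times> real \<Rightarrow> real^'n"
    and X V E F :: "real \<Rightarrow> real^'n" and z :: "real \<Rightarrow> real \<Rightarrow> real"
  assumes ab: "a < b"
    and L_deriv: "\<forall>p \<in> {a..b} \<times> (UNIV :: ((real^'n) \<times> (real^'n) \<times> real) set).
        (L has_derivative (\<lambda>(dt, dx, dv, dz). Lt p * dt + Lx p \<bullet> dx + Lv p \<bullet> dv + Lz p * dz))
          (at p within {a..b} \<times> UNIV)"
    and cLx: "continuous_on ({a..b} \<times> UNIV) Lx" and cLv: "continuous_on ({a..b} \<times> UNIV) Lv"
    and cLz: "continuous_on ({a..b} \<times> UNIV) Lz"
    and cX: "continuous_on {a..b} X" and cV: "continuous_on {a..b} V"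
    and cE: "continuous_on {a..b} E" and cF: "continuous_on {a..b} F"
    and zd: "\<And>\<epsilon> t. t \<in> {a..b} \<Longrightarrow>
        (z \<epsilon> has_real_derivative L (t, X t + \<epsilon> *\<^sub>R E t, V t + \<epsilon> *\<^sub>R F t, z \<epsilon> t)) (at t within {a..b})"
    and za: "\<And>\<epsilon>. z \<epsilon> a = z 0 a"
    and ext: "((\<lambda>\<epsilon>. z \<epsilon> b) has_real_derivative 0) (at 0)"
  shows "integral {a..b} (\<lambda>t. exp (- integral {a..t} (\<lambda>\<tau>. Lz (\<tau>, X \<tau>, V \<tau>, z 0 \<tau>)))
            * (Lx (t, X t, V t, z 0 t) \<bullet> E t + Lv (t, X t, V t, z 0 t) \<bullet> F t)) = 0"
proof -
  define p0 where "p0 = (\<lambda>t. (t, X t, V t, z 0 t))"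
  define \<Lambda> where "\<Lambda> = (\<lambda>t. exp (- integral {a..t} (\<lambda>\<tau>. Lz (p0 \<tau>))))"
  define Q where "Q = (\<lambda>t. Lx (p0 t) \<bullet> E t + Lv (p0 t) \<bullet> F t)"
  define R where "R = (\<lambda>\<epsilon> t. L (t, X t + \<epsilon> *\<^sub>R E t, V t + \<epsilon> *\<^sub>R F t, z \<epsilon> t) - L (t, X t, V t, z 0 t)
      - \<epsilon> * (Lx (t, X t, V t, z 0 t) \<bullet> E t + Lv (t, X t, V t, z 0 t) \<bullet> F t)
      - Lz (t, X t, V t, z 0 t) * (z \<epsilon> t - z 0 t))"
  define I where "I = integral {a..b} (\<lambda>t. \<Lambda> t * Q t)"
  have rb: "\<forall>e>0. \<exists>\<delta>>0. \<forall>\<epsilon>. \<bar>\<epsilon>\<bar> < \<delta> \<longrightarrow> (\<forall>t\<in>{a..b}. \<bar>R \<epsilon> t\<bar> \<le> e * \<bar>\<epsilon>\<bar>)"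
    unfolding R_def by (rule remainder_bound[OF ab L_deriv cLx cLv cLz cX cV cE cF zd za])
  have cz: "continuous_on {a..b} (z \<epsilon>)" for \<epsilon>
    using zd by (rule DERIV_continuous_on)
  have cp0: "continuous_on {a..b} p0" unfolding p0_def by (intro continuous_intros cX cV cz)
  have ip0: "p0 ` {a..b} \<subseteq> {a..b} \<times> UNIV" by (auto simp: p0_def)
  have cLz0: "continuous_on {a..b} (\<lambda>t. Lz (p0 t))" by (rule continuous_on_compose2[OF cLz cp0 ip0])
  have cLx0: "continuous_on {a..b} (\<lambda>t. Lx (p0 t))" by (rule continuous_on_compose2[OF cLx cp0 ip0])
  have cLv0: "continuous_on {a..b} (\<lambda>t. Lv (p0 t))" by (rule continuous_on_compose2[OF cLv cp0 ip0])
  have cQ: "continuous_on {a..b} Q" unfolding Q_def by (intro continuous_intros cLx0 cLv0 cE cF)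
  have dL: "(\<Lambda> has_real_derivative (\<Lambda> t * (- Lz (p0 t)))) (at t within {a..b})" if t: "t \<in> {a..b}" for t
  proof -
    have "((\<lambda>u. integral {a..u} (\<lambda>\<tau>. Lz (p0 \<tau>))) has_real_derivative Lz (p0 t)) (at t within {a..b})"
      by (rule integral_has_real_derivative[OF cLz0 t])
    from DERIV_chain2[OF DERIV_exp DERIV_minus[OF this]] show ?thesis by (simp add: \<Lambda>_def)
  qed
  have cLam: "continuous_on {a..b} \<Lambda>" using dL by (rule DERIV_continuous_on)
  have Lpos: "\<Lambda> t > 0" for t by (simp add: \<Lambda>_def)
  obtain LM where LM: "\<And>t. t \<in> {a..b} \<Longrightarrow> \<Lambda> t \<le> LM"
    using compact_imp_bounded[OF compact_continuous_image[OF cLam compact_Icc]]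
    by (auto simp: bounded_iff) (meson atLeastAtMost_iff abs_le_D1)
  have LM0: "LM > 0" using LM[of a] Lpos[of a] ab by auto
  have intQ: "((\<lambda>t. \<Lambda> t * Q t) has_integral I) {a..b}"
    unfolding I_def by (intro integrable_integral integrable_continuous_interval continuous_intros cLam cQ)
  have hasR: "((\<lambda>t. \<Lambda> t * R \<epsilon> t) has_integral (\<Lambda> b * (z \<epsilon> b - z 0 b) - \<epsilon> * I)) {a..b}" for \<epsilon>
  proof -
    define w where "w = (\<lambda>t. z \<epsilon> t - z 0 t)"
    have wd: "(w has_real_derivative (L (t, X t + \<epsilon> *\<^sub>R E t, V t + \<epsilon> *\<^sub>R F t, z \<epsilon> t) - L (p0 t))) (at t within {a..b})"
      if "t \<in> {a..b}" for t
      using DERIV_diff[OF zd[OF that, of \<epsilon>] zd[OF that, of 0]] by (simp add: w_def p0_def)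
    have d: "((\<lambda>t. \<Lambda> t * w t) has_vector_derivative \<Lambda> t * (\<epsilon> * Q t + R \<epsilon> t)) (at t within {a..b})"
      if t: "t \<in> {a..b}" for t
    proof -
      have "((\<lambda>t. \<Lambda> t * w t) has_real_derivative
          (\<Lambda> t * (- Lz (p0 t))) * w t + \<Lambda> t * (L (t, X t + \<epsilon> *\<^sub>R E t, V t + \<epsilon> *\<^sub>R F t, z \<epsilon> t) - L (p0 t)))
          (at t within {a..b})"
        by (rule DERIV_cong[OF DERIV_mult[OF dL[OF t] wd[OF t]]]) (simp add: algebra_simps)
      moreover have "(\<Lambda> t * (- Lz (p0 t))) * w t + \<Lambda> t * (L (t, X t + \<epsilon> *\<^sub>R E t, V t + \<epsilon> *\<^sub>R F t, z \<epsilon> t) - L (p0 t))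
          = \<Lambda> t * (\<epsilon> * Q t + R \<epsilon> t)"
        by (simp add: R_def Q_def p0_def w_def algebra_simps)
      ultimately show ?thesis by (simp add: has_real_derivative_iff_has_vector_derivative)
    qed
    have "((\<lambda>t. \<Lambda> t * (\<epsilon> * Q t + R \<epsilon> t)) has_integral (\<Lambda> b * w b - \<Lambda> a * w a)) {a..b}"
      using fundamental_theorem_of_calculus[of a b "\<lambda>t. \<Lambda> t * w t"] d ab by simp
    moreover have "w a = 0" using za[of \<epsilon>] by (simp add: w_def)
    ultimately have h1: "((\<lambda>t. \<Lambda> t * (\<epsilon> * Q t + R \<epsilon> t)) has_integral (\<Lambda> b * w b)) {a..b}" by simp
    have h2: "((\<lambda>t. \<epsilon> * (\<Lambda> t * Q t)) has_integral \<epsilon> * I) {a..b}"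
      by (rule has_integral_mult_right[OF intQ])
    from has_integral_diff[OF h1 h2] show ?thesis by (simp add: algebra_simps w_def)
  qed
  have lim: "((\<lambda>\<epsilon>. (z \<epsilon> b - z 0 b) / (\<epsilon> - 0)) \<longlongrightarrow> 0) (at 0)"
    using ext by (simp add: has_field_derivative_iff)
  show ?thesis
  proof (rule ccontr)
    assume I0: "\<not> ?thesis"
    have "I \<noteq> 0" using I0 by (simp add: I_def \<Lambda>_def Q_def p0_def)
    then have aI: "\<bar>I\<bar> > 0" by simp
    define e1 where "e1 = \<bar>I\<bar> / (4 * (LM * (b - a) + 1))"
    have den: "LM * (b - a) + 1 > 0" using LM0 ab by (simp add: add_pos_nonneg)
    have e1: "e1 > 0" using aI den by (simp add: e1_def)
    obtain \<delta>1 where d1: "\<delta>1 > 0" and rb1: "\<And>\<epsilon> t. \<bar>\<epsilon>\<bar> < \<delta>1 \<Longrightarrow> t \<in> {a..b} \<Longrightarrow> \<bar>R \<epsilon> t\<bar> \<le> e1 * \<bar>\<epsilon>\<bar>"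
      using rb e1 by blast
    define e2 where "e2 = \<bar>I\<bar> / (4 * (\<Lambda> b + 1))"
    have e2: "e2 > 0" using aI Lpos[of b] by (simp add: e2_def add_pos_pos)
    obtain \<delta>2 where d2: "\<delta>2 > 0" and l2: "\<And>\<epsilon>. \<epsilon> \<noteq> 0 \<and> norm (\<epsilon> - 0) < \<delta>2 \<longrightarrow> norm ((z \<epsilon> b - z 0 b) / (\<epsilon> - 0) - 0) < e2"
      using LIM_D[OF lim e2] by blast
    define \<epsilon> where "\<epsilon> = min \<delta>1 \<delta>2 / 2"
    have ep: "\<epsilon> > 0" "\<epsilon> < \<delta>1" "\<epsilon> < \<delta>2" using d1 d2 by (auto simp: \<epsilon>_def)
    have q: "\<bar>(z \<epsilon> b - z 0 b) / \<epsilon>\<bar> < e2" using l2[of \<epsilon>] ep by auto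
    then have wq: "\<bar>z \<epsilon> b - z 0 b\<bar> \<le> e2 * \<epsilon>" using ep by (simp add: abs_divide pos_divide_less_eq less_imp_le)
    have bnd: "norm (\<Lambda> t * R \<epsilon> t) \<le> LM * (e1 * \<epsilon>)" if t: "t \<in> {a..b} - {}" for t
    proof -
      have "\<bar>\<Lambda> t * R \<epsilon> t\<bar> = \<Lambda> t * \<bar>R \<epsilon> t\<bar>" using Lpos[of t] by (simp add: abs_mult)
      also have "\<dots> \<le> LM * (e1 * \<epsilon>)"
        using LM[of t] rb1[of \<epsilon> t] t ep Lpos[of t] by (intro mult_mono) auto
      finally show ?thesis by simp
    qed
    have "0 \<le> LM * (e1 * \<epsilon>)" using LM0 e1 ep by simp
    from has_integral_bound_real[OF this finite.emptyI hasR[of \<epsilon>] bnd]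
    have Rint: "\<bar>\<Lambda> b * (z \<epsilon> b - z 0 b) - \<epsilon> * I\<bar> \<le> (LM * (e1 * \<epsilon>)) * (b - a)"
      using ab by simp
    have A: "\<epsilon> * \<bar>I\<bar> \<le> \<bar>\<Lambda> b * (z \<epsilon> b - z 0 b)\<bar> + \<bar>\<Lambda> b * (z \<epsilon> b - z 0 b) - \<epsilon> * I\<bar>"
    proof -
      have "\<epsilon> * \<bar>I\<bar> = \<bar>\<epsilon> * I\<bar>" using ep by (simp add: abs_mult)
      then show ?thesis by linarith
    qed
    have B1: "\<bar>\<Lambda> b * (z \<epsilon> b - z 0 b)\<bar> \<le> \<Lambda> b * (e2 * \<epsilon>)"
      using wq Lpos[of b] by (simp add: abs_mult mult_left_mono)
    have B2: "\<Lambda> b * (e2 * \<epsilon>) \<le> \<epsilon> * \<bar>I\<bar> / 4"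
    proof -
      have "\<Lambda> b * e2 = \<bar>I\<bar> * (\<Lambda> b / (4 * (\<Lambda> b + 1)))" by (simp add: e2_def)
      also have "\<dots> \<le> \<bar>I\<bar> * (1/4)"
        using Lpos[of b] by (intro mult_left_mono) (auto simp: field_simps)
      finally have "\<Lambda> b * e2 \<le> \<bar>I\<bar> / 4" by simp
      then have "\<Lambda> b * e2 * \<epsilon> \<le> \<bar>I\<bar> / 4 * \<epsilon>" using ep by (intro mult_right_mono) auto
      then show ?thesis by (simp add: mult_ac)
    qed
    have C: "(LM * (e1 * \<epsilon>)) * (b - a) \<le> \<epsilon> * \<bar>I\<bar> / 4"
    proof -
      have "(LM * (e1 * \<epsilon>)) * (b - a) = \<epsilon> * \<bar>I\<bar> * ((LM * (b - a)) / (4 * (LM * (b - a) + 1)))"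
        using ab by (simp add: e1_def)
      also have "\<dots> \<le> \<epsilon> * \<bar>I\<bar> * (1/4)"
        using den ep aI by (intro mult_left_mono) (auto simp: field_simps)
      finally show ?thesis by simp
    qed
    have "\<epsilon> * \<bar>I\<bar> \<le> \<epsilon> * \<bar>I\<bar> / 4 + \<epsilon> * \<bar>I\<bar> / 4" using A B1 B2 C Rint by linarith
    moreover have "\<epsilon> * \<bar>I\<bar> > 0" using ep aI by simp
    ultimately show False by linarith
  qed
qed

theorem theorem3p1:
  fixes a b za :: real
    and \<alpha> xa xb :: "real^'n"
    and L Lt Lz :: "real \<times> (real^'n) \<times> (real^'n) \<times> real \<Rightarrow> real"
    and Lx Lv :: "real \<times> (real^'n) \<times> (real^'n) \<times> real \<Rightarrow> real^'n"
    and zsol :: "(real \<Rightarrow> real^'n) \<Rightarrow> real \<Rightarrow> real"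
    and x :: "real \<Rightarrow> real^'n"
  assumes ab: "a < b"
    and alpha: "\<forall>j. 0 < \<alpha> $ j \<and> \<alpha> $ j < 1"
    and L_deriv: "\<forall>p \<in> {a..b} \<times> (UNIV :: ((real^'n) \<times> (real^'n) \<times> real) set).
        (L has_derivative (\<lambda>(dt, dx, dv, dz). Lt p * dt + Lx p \<bullet> dx + Lv p \<bullet> dv + Lz p * dz))
          (at p within {a..b} \<times> UNIV)"
    and L_cont: "continuous_on ({a..b} \<times> UNIV) Lt" "continuous_on ({a..b} \<times> UNIV) Lx"
                "continuous_on ({a..b} \<times> UNIV) Lv" "continuous_on ({a..b} \<times> UNIV) Lz"
    and z_sol: "\<forall>y. admissible \<alpha> a b xa xb y \<longrightarrow> solves_ivp a b L \<alpha> za y (zsol y)"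
    and z_diff: "\<forall>\<eta>. variation \<alpha> a b \<eta> \<longrightarrow>
        (\<forall>t\<in>{a..b}. (\<lambda>\<epsilon>. zsol (\<lambda>s. x s + \<epsilon> *\<^sub>R \<eta> s) t) differentiable (at 0))"
    and x_adm: "admissible \<alpha> a b xa xb x"
    and RL: "\<forall>j. (\<forall>t\<in>{a..b}. rl_right_int (1 - \<alpha> $ j) b
                  (\<lambda>s. exp (- integral {a..s} (\<lambda>\<tau>. Lz (xz \<alpha> a x (zsol x) \<tau>)))
                         * Lv (xz \<alpha> a x (zsol x) s) $ j) differentiable (at t within {a..b}))
              \<and> continuous_on {a..b} (rl_right_deriv (\<alpha> $ j) a b
                  (\<lambda>s. exp (- integral {a..s} (\<lambda>\<tau>. Lz (xz \<alpha> a x (zsol x) \<tau>)))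
                         * Lv (xz \<alpha> a x (zsol x) s) $ j))"
    and extremum: "\<forall>\<eta>. variation \<alpha> a b \<eta> \<longrightarrow>
        ((\<lambda>\<epsilon>. zsol (\<lambda>s. x s + \<epsilon> *\<^sub>R \<eta> s) b) has_real_derivative 0) (at 0)"
  shows "\<forall>t\<in>{a..b}. \<forall>j.
     exp (- integral {a..t} (\<lambda>\<tau>. Lz (xz \<alpha> a x (zsol x) \<tau>))) * Lx (xz \<alpha> a x (zsol x) t) $ j
     + rl_right_deriv (\<alpha> $ j) a b
         (\<lambda>s. exp (- integral {a..s} (\<lambda>\<tau>. Lz (xz \<alpha> a x (zsol x) \<tau>)))
                * Lv (xz \<alpha> a x (zsol x) s) $ j) t = 0"
proof -
  have C1x: "C1_on a b x" and C1Cx: "C1_on a b (caputo_vec \<alpha> a x)" and xa: "x a = xa" and xb: "x b = xb"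
    using x_adm unfolding admissible_def by auto
  have al0: "0 < \<alpha> $ j" and al1: "\<alpha> $ j < 1" for j using alpha by auto
  have zs0: "solves_ivp a b L \<alpha> za x (zsol x)" using z_sol x_adm by blast
  define p0 where "p0 = xz \<alpha> a x (zsol x)"
  define \<Lambda> where "\<Lambda> = (\<lambda>t. exp (- integral {a..t} (\<lambda>\<tau>. Lz (p0 \<tau>))))"
  have cX: "continuous_on {a..b} x" by (rule C1_cont[OF C1x])
  have cCx: "continuous_on {a..b} (caputo_vec \<alpha> a x)" by (rule C1_cont[OF C1Cx])
  have cz0: "continuous_on {a..b} (zsol x)"
    using zs0 unfolding solves_ivp_def by (intro DERIV_continuous_on) blast
  have cp0: "continuous_on {a..b} p0" unfolding p0_def xz_def by (intro continuous_intros cX cCx cz0)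
  have ip0: "p0 ` {a..b} \<subseteq> {a..b} \<times> UNIV" by (auto simp: p0_def xz_def)
  have cLz0: "continuous_on {a..b} (\<lambda>t. Lz (p0 t))" by (rule continuous_on_compose2[OF L_cont(4) cp0 ip0])
  have cLx0: "continuous_on {a..b} (\<lambda>t. Lx (p0 t))" by (rule continuous_on_compose2[OF L_cont(2) cp0 ip0])
  have cLv0: "continuous_on {a..b} (\<lambda>t. Lv (p0 t))" by (rule continuous_on_compose2[OF L_cont(3) cp0 ip0])
  have cLam: "continuous_on {a..b} \<Lambda>"
  proof -
    have "continuous_on {a..b} (\<lambda>t. integral {a..t} (\<lambda>\<tau>. Lz (p0 \<tau>)))"
      by (rule DERIV_continuous_on[OF integral_has_real_derivative[OF cLz0]])
    then show ?thesis unfolding \<Lambda>_def by (intro continuous_intros)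
  qed
  have varI: "integral {a..b} (\<lambda>t. \<Lambda> t * (Lx (p0 t) \<bullet> \<eta> t + Lv (p0 t) \<bullet> caputo_vec \<alpha> a \<eta> t)) = 0"
    if var: "variation \<alpha> a b \<eta>" for \<eta>
  proof -
    have C1e: "C1_on a b \<eta>" and C1Ce: "C1_on a b (caputo_vec \<alpha> a \<eta>)" and ea: "\<eta> a = 0" and eb: "\<eta> b = 0"
      using var unfolding variation_def by auto
    define z where "z = (\<lambda>\<epsilon>. zsol (\<lambda>s. x s + \<epsilon> *\<^sub>R \<eta> s))"
    have lin: "caputo_vec \<alpha> a (\<lambda>s. x s + \<epsilon> *\<^sub>R \<eta> s) t = caputo_vec \<alpha> a x t + \<epsilon> *\<^sub>R caputo_vec \<alpha> a \<eta> t"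
      if t: "t \<in> {a..b}" for \<epsilon> t
    proof -
      have "caputo (\<alpha> $ k) a (\<lambda>s. x s $ k + \<epsilon> * \<eta> s $ k) t = caputo (\<alpha> $ k) a (\<lambda>s. x s $ k) t + \<epsilon> * caputo (\<alpha> $ k) a (\<lambda>s. \<eta> s $ k) t" for k
        by (rule caputo_lin[OF C1_comp[OF C1x] C1_comp[OF C1e] t al1])
      then show ?thesis by (simp add: caputo_vec_def vec_eq_iff)
    qed
    have adm: "admissible \<alpha> a b xa xb (\<lambda>s. x s + \<epsilon> *\<^sub>R \<eta> s)" for \<epsilon>
    proof -
      have "C1_on a b (\<lambda>s. x s + \<epsilon> *\<^sub>R \<eta> s)" by (rule C1_add[OF C1x C1e])
      moreover have "C1_on a b (caputo_vec \<alpha> a (\<lambda>s. x s + \<epsilon> *\<^sub>R \<eta> s))"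
        by (rule C1_cong[OF _ C1_add[OF C1Cx C1Ce, of \<epsilon>]]) (simp add: lin)
      ultimately show ?thesis unfolding admissible_def using xa xb ea eb by simp
    qed
    have zd: "(z \<epsilon> has_real_derivative L (t, x t + \<epsilon> *\<^sub>R \<eta> t, caputo_vec \<alpha> a x t + \<epsilon> *\<^sub>R caputo_vec \<alpha> a \<eta> t, z \<epsilon> t)) (at t within {a..b})"
      if t: "t \<in> {a..b}" for \<epsilon> t
    proof -
      have "solves_ivp a b L \<alpha> za (\<lambda>s. x s + \<epsilon> *\<^sub>R \<eta> s) (z \<epsilon>)" using z_sol adm[of \<epsilon>] by (simp add: z_def)
      then have "(z \<epsilon> has_real_derivative L (xz \<alpha> a (\<lambda>s. x s + \<epsilon> *\<^sub>R \<eta> s) (z \<epsilon>) t)) (at t within {a..b})"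
        using t unfolding solves_ivp_def by blast
      then show ?thesis using lin[OF t, of \<epsilon>] by (simp add: xz_def)
    qed
    have za': "z \<epsilon> a = z 0 a" for \<epsilon>
    proof -
      have "z \<epsilon> a = za" using z_sol adm[of \<epsilon>] by (simp add: z_def solves_ivp_def)
      moreover have "z 0 a = za" using z_sol adm[of 0] by (simp add: z_def solves_ivp_def)
      ultimately show ?thesis by simp
    qed
    have z0: "z 0 = zsol x" by (simp add: z_def)
    have ext: "((\<lambda>\<epsilon>. z \<epsilon> b) has_real_derivative 0) (at 0)"
      using extremum var by (simp add: z_def)
    have "integral {a..b} (\<lambda>t. exp (- integral {a..t} (\<lambda>\<tau>. Lz (\<tau>, x \<tau>, caputo_vec \<alpha> a x \<tau>, z 0 \<tau>)))
            * (Lx (t, x t, caputo_vec \<alpha> a x t, z 0 t) \<bullet> \<eta> t + Lv (t, x t, caputo_vec \<alpha> a x t, z 0 t) \<bullet> caputo_vec \<alpha> a \<eta> t)) = 0"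
      by (rule variational[OF ab L_deriv L_cont(2) L_cont(3) L_cont(4) cX cCx C1_cont[OF C1e] C1_cont[OF C1Ce] zd za' ext])
    then show ?thesis by (simp add: z0 \<Lambda>_def p0_def xz_def)
  qed
  show ?thesis
  proof (intro ballI allI)
    fix t j assume t: "t \<in> {a..b}"
    define G where "G = (\<lambda>s. exp (- integral {a..s} (\<lambda>\<tau>. Lz (xz \<alpha> a x (zsol x) \<tau>))) * Lv (xz \<alpha> a x (zsol x) s) $ j)"
    have G': "G = (\<lambda>s. \<Lambda> s * Lv (p0 s) $ j)" by (simp add: G_def \<Lambda>_def p0_def)
    define Dj where "Dj = rl_right_deriv (\<alpha> $ j) a b G"
    have dI: "\<forall>t\<in>{a..b}. rl_right_int (1 - \<alpha> $ j) b G differentiable (at t within {a..b})"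
      and cD: "continuous_on {a..b} Dj" using RL unfolding G_def Dj_def by auto
    have cG: "continuous_on {a..b} G" unfolding G' by (intro continuous_intros cLam cLv0)
    define Fj where "Fj = (\<lambda>t. \<Lambda> t * Lx (p0 t) $ j + Dj t)"
    have cF: "continuous_on {a..b} Fj" unfolding Fj_def by (intro continuous_intros cLam cLx0 cD)
    have orth: "integral {a..b} (\<lambda>t. Fj t * psi m a b t) = 0" if m: "m \<ge> 2" for m
    proof -
      have m1: "1 \<le> m" using m by simp
      define \<eta> where "\<eta> = (\<lambda>s. psi m a b s *\<^sub>R (axis j 1 :: real^'n))"
      have cpsi: "continuous_on {a..b} (psi m a b)" unfolding psi_def by (intro continuous_intros)
      have dCp: "(Cpsi (\<alpha> $ j) m a b has_real_derivative dCpsi (\<alpha> $ j) m a b s) (at s within {a..b})"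
        if "s \<in> {a..b}" for s
        using Cpsi_deriv[OF al0[of j] al1[of j] m, where a=a and t=s and b=b] that by (auto intro: DERIV_subset)
      have cCpsi: "continuous_on {a..b} (Cpsi (\<alpha> $ j) m a b)"
        using dCp by (rule DERIV_continuous_on)
      have Ceta: "caputo_vec \<alpha> a \<eta> t = Cpsi (\<alpha> $ j) m a b t *\<^sub>R axis j 1" if t: "t \<in> {a..b}" for t
      proof -
        have "caputo (\<alpha> $ k) a (\<lambda>s. \<eta> s $ k) t = (Cpsi (\<alpha> $ j) m a b t *\<^sub>R (axis j 1 :: real^'n)) $ k" for k
        proof (cases "k = j")
          case True
          then have "(\<lambda>s. \<eta> s $ k) = psi m a b" by (simp add: \<eta>_def axis_def)
          then show ?thesis using caputo_psi[OF al0 al1 m, where a=a and t=t and b=b] t True by (simp add: axis_def)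
        next
          case False
          then have "(\<lambda>s. \<eta> s $ k) = (\<lambda>s. 0)" by (simp add: \<eta>_def axis_def)
          then show ?thesis using caputo_zero[of a t "\<alpha> $ k"] t False by (simp add: axis_def)
        qed
        then show ?thesis by (simp add: caputo_vec_def vec_eq_iff)
      qed
      have var: "variation \<alpha> a b \<eta>"
      proof -
        have "C1_on a b \<eta>" unfolding C1_on_def \<eta>_def
        proof (intro exI[of _ "\<lambda>s. dpsi m a b s *\<^sub>R (axis j 1 :: real^'n)"] conjI ballI)
          show "continuous_on {a..b} (\<lambda>s. dpsi m a b s *\<^sub>R (axis j 1 :: real^'n))"
            unfolding dpsi_def by (intro continuous_intros)
          fix s assume "s \<in> {a..b}"
          show "((\<lambda>s. psi m a b s *\<^sub>R (axis j 1 :: real^'n)) has_vector_derivative dpsi m a b s *\<^sub>R axis j 1) (at s within {a..b})"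
            using psi_deriv[OF m1, of a b s "{a..b}"]
            by (auto intro!: derivative_eq_intros simp: has_real_derivative_iff_has_vector_derivative)
        qed
        moreover have "C1_on a b (caputo_vec \<alpha> a \<eta>)"
        proof (rule C1_cong[of _ _ "\<lambda>t. Cpsi (\<alpha> $ j) m a b t *\<^sub>R axis j 1"])
          show "C1_on a b (\<lambda>t. Cpsi (\<alpha> $ j) m a b t *\<^sub>R (axis j 1 :: real^'n))" unfolding C1_on_def
          proof (intro exI[of _ "\<lambda>t. dCpsi (\<alpha> $ j) m a b t *\<^sub>R (axis j 1 :: real^'n)"] conjI ballI)
            show "continuous_on {a..b} (\<lambda>t. dCpsi (\<alpha> $ j) m a b t *\<^sub>R (axis j 1 :: real^'n))"
              using dCpsi_cont[OF al0 al1 m, where a=a and b=b] by (intro continuous_intros)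
            fix s assume s: "s \<in> {a..b}"
            have "(Cpsi (\<alpha> $ j) m a b has_real_derivative dCpsi (\<alpha> $ j) m a b s) (at s within {a..b})"
              using Cpsi_deriv[OF al0[of j] al1[of j] m, where a=a and t=s and b=b] s by (auto intro: DERIV_subset)
            then show "((\<lambda>t. Cpsi (\<alpha> $ j) m a b t *\<^sub>R (axis j 1 :: real^'n)) has_vector_derivative dCpsi (\<alpha> $ j) m a b s *\<^sub>R axis j 1) (at s within {a..b})"
              by (auto intro!: derivative_eq_intros simp: has_real_derivative_iff_has_vector_derivative)
          qed
        qed (simp add: Ceta)
        moreover have "\<eta> a = 0" "\<eta> b = 0" using psi_ends[of m a b] m1 by (auto simp: \<eta>_def)
        ultimately show ?thesis unfolding variation_def by simp
      qed
      have v0: "integral {a..b} (\<lambda>t. \<Lambda> t * (Lx (p0 t) \<bullet> \<eta> t + Lv (p0 t) \<bullet> caputo_vec \<alpha> a \<eta> t)) = 0"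
        by (rule varI[OF var])
      have eqi: "\<Lambda> t * (Lx (p0 t) \<bullet> \<eta> t + Lv (p0 t) \<bullet> caputo_vec \<alpha> a \<eta> t)
          = \<Lambda> t * Lx (p0 t) $ j * psi m a b t + G t * caputo (\<alpha> $ j) a (psi m a b) t" if t: "t \<in> {a..b}" for t
        unfolding Ceta[OF t] using t caputo_psi[OF al0[of j] al1[of j] m, where a=a and t=t and b=b]
        by (simp add: \<eta>_def G' inner_axis algebra_simps)
      have i1: "(\<lambda>t. \<Lambda> t * Lx (p0 t) $ j * psi m a b t) integrable_on {a..b}"
        by (intro integrable_continuous_interval continuous_intros cLam cLx0 cpsi)
      have i2: "(\<lambda>t. G t * caputo (\<alpha> $ j) a (psi m a b) t) integrable_on {a..b}"
      proof (rule integrable_eq)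
        show "(\<lambda>t. G t * Cpsi (\<alpha> $ j) m a b t) integrable_on {a..b}"
          by (intro integrable_continuous_interval continuous_intros cG cCpsi)
        fix t assume "t \<in> {a..b}"
        then show "G t * Cpsi (\<alpha> $ j) m a b t = G t * caputo (\<alpha> $ j) a (psi m a b) t"
          using caputo_psi[OF al0 al1 m, where a=a and t=t and b=b] by simp
      qed
      have i3: "(\<lambda>t. psi m a b t * Dj t) integrable_on {a..b}"
        by (intro integrable_continuous_interval continuous_intros cpsi cD)
      have "0 = integral {a..b} (\<lambda>t. \<Lambda> t * Lx (p0 t) $ j * psi m a b t + G t * caputo (\<alpha> $ j) a (psi m a b) t)"
        using v0 eqi by (metis (no_types, lifting) integral_cong)
      also have "\<dots> = integral {a..b} (\<lambda>t. \<Lambda> t * Lx (p0 t) $ j * psi m a b t) + integral {a..b} (\<lambda>t. G t * caputo (\<alpha> $ j) a (psi m a b) t)"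
        by (rule integral_add[OF i1 i2])
      also have "integral {a..b} (\<lambda>t. G t * caputo (\<alpha> $ j) a (psi m a b) t) = integral {a..b} (\<lambda>t. psi m a b t * Dj t)"
        unfolding Dj_def by (rule frac_ibp[OF ab al0 al1 m cG dI cD[unfolded Dj_def]])
      also have "integral {a..b} (\<lambda>t. \<Lambda> t * Lx (p0 t) $ j * psi m a b t) + integral {a..b} (\<lambda>t. psi m a b t * Dj t)
          = integral {a..b} (\<lambda>t. Fj t * psi m a b t)"
        by (subst integral_add[OF i1 i3, symmetric]) (auto intro!: integral_cong simp: Fj_def algebra_simps)
      finally show ?thesis by simp
    qed
    have "\<forall>t\<in>{a..b}. Fj t = 0" by (rule fund_lemma[OF ab cF orth])
    then have "Fj t = 0" using t by blast
    then show "exp (- integral {a..t} (\<lambda>\<tau>. Lz (xz \<alpha> a x (zsol x) \<tau>))) * Lx (xz \<alpha> a x (zsol x) t) $ j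
     + rl_right_deriv (\<alpha> $ j) a b
         (\<lambda>s. exp (- integral {a..s} (\<lambda>\<tau>. Lz (xz \<alpha> a x (zsol x) \<tau>)))
                * Lv (xz \<alpha> a x (zsol x) s) $ j) t = 0"
      by (simp add: Fj_def Dj_def G_def \<Lambda>_def p0_def)
  qed
qed

end
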